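(* Let $X$ be a sofic shift and let $\varphi$ be a flip for $(X,\sigma_X)$. Then the generating function $$G_{\sigma_X,\varphi}(t)=\sum_{m=1}^\infty\left(p_{2m-1,0}(\sigma_X,\varphi)\,t^{2m-1}+\frac{p_{2m,0}(\sigma_X,\varphi)+p_{2m,1}(\sigma_X,\varphi)}{2}\,t^{2m}\right)$$ of $(X,\sigma_X,\varphi)$ is a rational function.
   Context: For a shift space $X$ (over a finite alphabet), $\sigma_X$ denotes the shift map. A flip for $(X,\sigma_X)$ is a homeomorphism $\varphi:X\to X$ with $\varphi\sigma_X=\sigma_X^{-1}\varphi$ and $\varphi^2=\mathrm{id}_X$. For a positive integer $m$ and an integer $n$, $p_{m,n}(\sigma_X,\varphi)=|\{x\in X:\sigma_X^m(x)=\sigma_X^n\varphi(x)=x\}|$. *)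

theory Defs
  imports "HOL-Analysis.Analysis" "HOL-Computational_Algebra.Polynomial_FPS"
begin

definition shift_pow :: "int \<Rightarrow> (int \<Rightarrow> 'a) \<Rightarrow> (int \<Rightarrow> 'a)" where
  "shift_pow n x = (\<lambda>i. x (i + n))"

definition shift_map :: "(int \<Rightarrow> 'a) \<Rightarrow> (int \<Rightarrow> 'a)" where
  "shift_map x = (\<lambda>i. x (i + 1))"

definition full_shift_topology :: "(int \<Rightarrow> 'a) topology" where
  "full_shift_topology = product_topology (\<lambda>_. discrete_topology (UNIV :: 'a set)) UNIV"

text \<open>Sofic shift (Lind--Marcus): the set of label sequences of bi-infinite paths
  in a finite labelled graph.\<close>
definition sofic_shift :: "(int \<Rightarrow> 'a::finite) set \<Rightarrow> bool" where
  "sofic_shift X \<longleftrightarrow> (\<exists>(E::nat set) (src::nat \<Rightarrow> nat) (tgt::nat \<Rightarrow> nat) (lab::nat \<Rightarrow> 'a).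
      finite E \<and>
      X = {x. \<exists>\<xi>::int \<Rightarrow> nat. (\<forall>i. \<xi> i \<in> E \<and> tgt (\<xi> i) = src (\<xi> (i + 1))) \<and>
                              (\<forall>i. x i = lab (\<xi> i))})"

definition is_flip :: "(int \<Rightarrow> 'a) set \<Rightarrow> ((int \<Rightarrow> 'a) \<Rightarrow> (int \<Rightarrow> 'a)) \<Rightarrow> bool" where
  "is_flip X \<phi> \<longleftrightarrow>
     homeomorphic_map (subtopology full_shift_topology X) (subtopology full_shift_topology X) \<phi> \<and>
     (\<forall>x\<in>X. \<phi> (shift_map x) = shift_pow (-1) (\<phi> x)) \<and>
     (\<forall>x\<in>X. \<phi> (\<phi> x) = x)"

definition p_count :: "(int \<Rightarrow> 'a) set \<Rightarrow> ((int \<Rightarrow> 'a) \<Rightarrow> (int \<Rightarrow> 'a)) \<Rightarrow> nat \<Rightarrow> int \<Rightarrow> nat" where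
  "p_count X \<phi> m n = card {x\<in>X. (shift_map ^^ m) x = x \<and> shift_pow n (\<phi> x) = x}"

definition flip_gen_fun :: "(int \<Rightarrow> 'a) set \<Rightarrow> ((int \<Rightarrow> 'a) \<Rightarrow> (int \<Rightarrow> 'a)) \<Rightarrow> real fps" where
  "flip_gen_fun X \<phi> = Abs_fps (\<lambda>k. if k = 0 then 0
       else if odd k then real (p_count X \<phi> k 0)
       else (real (p_count X \<phi> k 0) + real (p_count X \<phi> k 1)) / 2)"

definition rational_fps :: "real fps \<Rightarrow> bool" where
  "rational_fps F \<longleftrightarrow> (\<exists>P Q :: real poly. Q \<noteq> 0 \<and> fps_of_poly Q * F = fps_of_poly P)"

end

theory Submission
  imports Defs
begin

definition linrec :: "(nat \<Rightarrow> real) \<Rightarrow> bool" where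
 "linrec c \<longleftrightarrow> (\<exists>M (q::nat\<Rightarrow>real) K. (\<exists>j\<le>M. q j \<noteq> 0) \<and> (\<forall>k\<ge>K. (\<Sum>j\<le>M. q j * c (k+j)) = 0))"

lemma coeff_recpoly:
  "coeff (\<Sum>j\<le>M. monom (q j) (M - j)) i = (if i \<le> M then q (M - i) else (0::real))"
proof -
  have "coeff (\<Sum>j\<le>M. monom (q j) (M - j)) i = (\<Sum>j\<le>M. if M - j = i then q j else 0)"
    by (simp add: coeff_sum coeff_monom)
  also have "\<dots> = (if i \<le> M then q (M - i) else 0)"
  proof (cases "i \<le> M")
    case True
    have "(\<Sum>j\<le>M. if M - j = i then q j else 0) = (\<Sum>j\<le>M. if j = M - i then q j else 0)"
      by (intro sum.cong) (use True in auto)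
    then show ?thesis using True by simp
  next
    case False
    then show ?thesis by (intro trans[OF sum.neutral]) auto
  qed
  finally show ?thesis .
qed

lemma fps_poly_if_eventually_zero:
  fixes F :: "real fps"
  assumes "\<And>n. n \<ge> N \<Longrightarrow> fps_nth F n = 0"
  shows "\<exists>P. F = fps_of_poly P"
proof -
  have "F = fps_cutoff N F" using assms by (auto simp: fps_eq_iff not_less)
  then show ?thesis by (metis fps_of_poly_truncate)
qed

lemma linrec_rational:
  assumes "linrec c" shows "rational_fps (Abs_fps c)"
proof -
  obtain M q K where nz: "\<exists>j\<le>M. q j \<noteq> 0" and rec: "\<And>k. k \<ge> K \<Longrightarrow> (\<Sum>j\<le>M. q j * c (k+j)) = 0"
    using assms unfolding linrec_def by blast
  define Q where "Q = (\<Sum>j\<le>M. monom (q j) (M - j))"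
  have cQ: "coeff Q i = (if i \<le> M then q (M - i) else 0)" for i
    unfolding Q_def by (rule coeff_recpoly)
  obtain j0 where j0: "j0 \<le> M" "q j0 \<noteq> 0" using nz by blast
  have "coeff Q (M - j0) \<noteq> 0" using cQ j0 by simp
  then have Qnz: "Q \<noteq> 0" by auto
  have z: "fps_nth (fps_of_poly Q * Abs_fps c) n = 0" if "n \<ge> M + K" for n
  proof -
    have "fps_nth (fps_of_poly Q * Abs_fps c) n = (\<Sum>i=0..n. coeff Q i * c (n - i))"
      by (simp add: fps_mult_nth)
    also have "\<dots> = (\<Sum>i=0..M. coeff Q i * c (n - i))"
      using that by (intro sum.mono_neutral_right) (auto simp: cQ)
    also have "\<dots> = (\<Sum>i=0..M. q (M - i) * c (n - i))"
      by (intro sum.cong) (auto simp: cQ)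
    also have "\<dots> = (\<Sum>j\<le>M. q j * c ((n - M) + j))"
    proof (rule sum.reindex_bij_witness[where i="\<lambda>j. M - j" and j="\<lambda>i. M - i"])
    qed (use that in auto)
    also have "\<dots> = 0" using rec[of "n - M"] that by simp
    finally show ?thesis .
  qed
  obtain P where "fps_of_poly Q * Abs_fps c = fps_of_poly P"
    using fps_poly_if_eventually_zero[OF z] by blast
  then show ?thesis unfolding rational_fps_def using Qnz by blast
qed

lemma rational_add:
  assumes "rational_fps A" "rational_fps B" shows "rational_fps (A + B)"
proof -
  obtain P1 Q1 where 1: "Q1 \<noteq> 0" "fps_of_poly Q1 * A = fps_of_poly P1" using assms(1) rational_fps_def by blast
  obtain P2 Q2 where 2: "Q2 \<noteq> 0" "fps_of_poly Q2 * B = fps_of_poly P2" using assms(2) rational_fps_def by blast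
  have "fps_of_poly (Q1 * Q2) * (A + B) = fps_of_poly (Q2 * P1 + Q1 * P2)"
    by (simp add: fps_of_poly_mult fps_of_poly_add algebra_simps 1(2)[symmetric] 2(2)[symmetric])
  moreover have "Q1 * Q2 \<noteq> 0" using 1 2 by simp
  ultimately show ?thesis unfolding rational_fps_def by blast
qed

lemma linrec_eventually:
  assumes "linrec c" "\<And>k. k \<ge> K0 \<Longrightarrow> d k = c k" shows "linrec d"
proof -
  obtain M q K where nz: "\<exists>j\<le>M. q j \<noteq> 0" and rec: "\<And>k. k \<ge> K \<Longrightarrow> (\<Sum>j\<le>M. q j * c (k+j)) = 0"
    using assms unfolding linrec_def by blast
  have "\<forall>k\<ge>max K K0. (\<Sum>j\<le>M. q j * d (k+j)) = 0"
    using rec assms(2) by auto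
  then show ?thesis unfolding linrec_def using nz by blast
qed

lemma linrec_shift:
  assumes "linrec c" shows "linrec (\<lambda>k. c (k + C))"
proof -
  obtain M q K where nz: "\<exists>j\<le>M. q j \<noteq> 0" and rec: "\<And>k. k \<ge> K \<Longrightarrow> (\<Sum>j\<le>M. q j * c (k+j)) = 0"
    using assms unfolding linrec_def by blast
  have "\<forall>k\<ge>K. (\<Sum>j\<le>M. q j * c (k + j + C)) = 0"
  proof (intro allI impI)
    fix k assume "k \<ge> K"
    then have "(\<Sum>j\<le>M. q j * c (k + C + j)) = 0" using rec by simp
    then show "(\<Sum>j\<le>M. q j * c (k + j + C)) = 0" by (simp add: add_ac)
  qed
  then show ?thesis unfolding linrec_def using nz by (auto simp: add_ac)
qed

lemma linrec_scale:
  assumes "linrec c" shows "linrec (\<lambda>k. a * c k)"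
proof -
  obtain M q K where nz: "\<exists>j\<le>M. q j \<noteq> 0" and rec: "\<And>k. k \<ge> K \<Longrightarrow> (\<Sum>j\<le>M. q j * c (k+j)) = 0"
    using assms unfolding linrec_def by blast
  have "\<forall>k\<ge>K. (\<Sum>j\<le>M. q j * (a * c (k + j))) = 0"
    using rec by (auto simp: sum_distrib_left[symmetric] mult_ac)
  then show ?thesis unfolding linrec_def using nz by blast
qed

lemma linrec_spread:
  assumes "linrec c" "e < 2"
  shows "linrec (\<lambda>k. if k mod 2 = e then c (k div 2) else 0)"
proof -
  obtain M q K where nz: "\<exists>j\<le>M. q j \<noteq> 0" and rec: "\<And>k. k \<ge> K \<Longrightarrow> (\<Sum>j\<le>M. q j * c (k+j)) = 0"
    using assms unfolding linrec_def by blast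
  define q' where "q' i = (if even i then q (i div 2) else 0)" for i
  have nz': "\<exists>j\<le>2*M. q' j \<noteq> 0" using nz unfolding q'_def
    by (metis div_mult_self1_is_m dvd_triv_left mult.commute mult_le_mono2 zero_less_numeral)
  have "(\<Sum>j\<le>2*M. q' j * (if (k+j) mod 2 = e then c ((k+j) div 2) else 0)) = 0" if k: "k \<ge> 2*K" for k
  proof -
    have "(\<Sum>j\<le>2*M. q' j * (if (k+j) mod 2 = e then c ((k+j) div 2) else 0))
        = (\<Sum>j\<in>(\<lambda>i. 2*i) ` {..M}. q' j * (if (k+j) mod 2 = e then c ((k+j) div 2) else 0))"
      by (intro sum.mono_neutral_right) (auto simp: q'_def)
    also have "\<dots> = (\<Sum>i\<le>M. q i * (if (k + 2*i) mod 2 = e then c ((k + 2*i) div 2) else 0))"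
      by (subst sum.reindex) (auto simp: inj_on_def q'_def)
    also have "\<dots> = (\<Sum>i\<le>M. q i * (if k mod 2 = e then c (k div 2 + i) else 0))"
      by (intro sum.cong) (auto simp: add_ac)
    also have "\<dots> = 0"
    proof (cases "k mod 2 = e")
      case True then show ?thesis using rec[of "k div 2"] k by (simp add: add_ac)
    qed simp
    finally show ?thesis .
  qed
  then show ?thesis unfolding linrec_def using nz' by blast
qed


definition regfun :: "('b list \<Rightarrow> 'c) \<Rightarrow> bool" where
  "regfun g \<longleftrightarrow> finite (range (\<lambda>u v. g (u @ v)))"

lemma linalg_dep:
  fixes v :: "'j \<Rightarrow> 'f \<Rightarrow> real"
  assumes "finite S" "finite J" "card J > card S"
  shows "\<exists>q. (\<exists>j\<in>J. q j \<noteq> 0) \<and> (\<forall>f\<in>S. (\<Sum>j\<in>J. q j * v j f) = 0)"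
  using assms
proof (induction S arbitrary: J v rule: finite_induct)
  case empty
  then obtain j0 where "j0 \<in> J" by fastforce
  then show ?case by (intro exI[of _ "\<lambda>j. if j = j0 then 1 else 0"]) auto
next
  case (insert s S)
  show ?case
  proof (cases "\<forall>j\<in>J. v j s = 0")
    case True
    from insert.IH[of J v] insert.prems insert.hyps obtain q where
      q: "\<exists>j\<in>J. q j \<noteq> 0" "\<forall>f\<in>S. (\<Sum>j\<in>J. q j * v j f) = 0" by auto
    then show ?thesis using True by (intro exI[of _ q]) auto
  next
    case False
    then obtain j0 where j0: "j0 \<in> J" "v j0 s \<noteq> 0" by auto
    define J' where "J' = J - {j0}"
    define w where "w j f = v j f - (v j s / v j0 s) * v j0 f" for j f
    have cJ': "card J' > card S" using insert.prems insert.hyps j0 unfolding J'_def by auto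
    from insert.IH[of J' w] cJ' insert.prems obtain q' where
      q': "\<exists>j\<in>J'. q' j \<noteq> 0" "\<forall>f\<in>S. (\<Sum>j\<in>J'. q' j * w j f) = 0" unfolding J'_def by auto
    define q where "q j = (if j = j0 then - (\<Sum>i\<in>J'. q' i * v i s) / v j0 s else q' j)" for j
    have fJ: "finite J'" using insert.prems unfolding J'_def by auto
    have key: "(\<Sum>j\<in>J. q j * v j f) = (\<Sum>j\<in>J'. q' j * w j f)" for f
    proof -
      have "J = insert j0 J'" "j0 \<notin> J'" using j0 unfolding J'_def by auto
      then have "(\<Sum>j\<in>J. q j * v j f) = q j0 * v j0 f + (\<Sum>j\<in>J'. q j * v j f)"
        using fJ by simp
      also have "(\<Sum>j\<in>J'. q j * v j f) = (\<Sum>j\<in>J'. q' j * v j f)"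
        by (intro sum.cong) (auto simp: q_def J'_def)
      also have "(\<Sum>j\<in>J'. q' j * w j f) = (\<Sum>j\<in>J'. q' j * v j f) - (\<Sum>j\<in>J'. q' j * v j s) / v j0 s * v j0 f"
        by (simp add: w_def algebra_simps sum_subtractf sum_distrib_left sum_divide_distrib sum_distrib_right)
      ultimately show ?thesis by (simp add: q_def)
    qed
    have "(\<Sum>j\<in>J'. q' j * w j s) = 0" using j0 by (simp add: w_def)
    then have "\<forall>f\<in>insert s S. (\<Sum>j\<in>J. q j * v j f) = 0" using key q'(2) by auto
    moreover have "\<exists>j\<in>J. q j \<noteq> 0" using q'(1) unfolding q_def J'_def by auto
    ultimately show ?thesis by blast
  qed
qed

definition cntw :: "('b list \<Rightarrow> bool) \<Rightarrow> nat \<Rightarrow> real" where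
  "cntw f L = real (card {w. length w = L \<and> f w})"

lemma finite_len_lists: "finite {w :: 'b::finite list. length w = L \<and> P w}"
proof -
  have "finite {w :: 'b list. set w \<subseteq> UNIV \<and> length w = L}" by (rule finite_lists_length_eq) simp
  then show ?thesis by (rule finite_subset[rotated]) auto
qed

lemma cntw_Suc: "cntw f (Suc L) = (\<Sum>b\<in>(UNIV::'b::finite set). cntw (\<lambda>v. f (b # v)) L)"
proof -
  have eq: "{w. length w = Suc L \<and> f w} = (\<Union>b. (Cons b) ` {w. length w = L \<and> f (b # w)})"
    by (auto simp: length_Suc_conv)
  have "card (\<Union>b. (Cons b) ` {w. length w = L \<and> f (b # w)}) = (\<Sum>b\<in>UNIV. card ((Cons b) ` {w. length w = L \<and> f (b # w)}))"
    by (intro card_UN_disjoint) (auto intro: finite_len_lists)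
  also have "\<dots> = (\<Sum>b\<in>UNIV. card {w. length w = L \<and> f (b # w)})"
    by (intro sum.cong refl card_image) auto
  finally show ?thesis unfolding cntw_def eq by simp
qed

theorem regfun_count_linrec:
  fixes g :: "'b::finite list \<Rightarrow> bool"
  assumes "regfun g"
  shows "linrec (\<lambda>L. real (card {w. length w = L \<and> g w}))"
proof -
  define S where "S = range (\<lambda>u v. g (u @ v))"
  have fS: "finite S" using assms unfolding regfun_def S_def by simp
  have clos: "(\<lambda>v. f (b # v)) \<in> S" if "f \<in> S" for f b
  proof -
    from that obtain u where "f = (\<lambda>v. g (u @ v))" unfolding S_def by auto
    then have "(\<lambda>v. f (b # v)) = (\<lambda>v. g ((u @ [b]) @ v))" by simp
    then show ?thesis unfolding S_def by blast
  qed
  have gS: "g \<in> S" unfolding S_def by (rule range_eqI[of _ _ "[]"]) simp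
  define M where "M = card S"
  obtain q where q: "\<exists>j\<in>{..M}. q j \<noteq> 0" "\<forall>f\<in>S. (\<Sum>j\<in>{..M}. q j * cntw f j) = 0"
    using linalg_dep[OF fS, of "{..M}" "\<lambda>j f. cntw f j"] unfolding M_def by auto
  have rec: "\<forall>f\<in>S. (\<Sum>j\<le>M. q j * cntw f (k + j)) = 0" for k
  proof (induction k)
    case 0 then show ?case using q(2) by simp
  next
    case (Suc k)
    show ?case
    proof
      fix f assume f: "f \<in> S"
      have "(\<Sum>j\<le>M. q j * cntw f (Suc k + j)) = (\<Sum>j\<le>M. \<Sum>b\<in>UNIV. q j * cntw (\<lambda>v. f (b # v)) (k + j))"
        by (simp add: cntw_Suc sum_distrib_left)
      also have "\<dots> = (\<Sum>b\<in>UNIV. \<Sum>j\<le>M. q j * cntw (\<lambda>v. f (b # v)) (k + j))"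
        by (rule sum.swap)
      also have "\<dots> = 0" using Suc clos f by simp
      finally show "(\<Sum>j\<le>M. q j * cntw f (Suc k + j)) = 0" .
    qed
  qed
  have "\<forall>k\<ge>0. (\<Sum>j\<le>M. q j * real (card {w. length w = k + j \<and> g w})) = 0"
    using rec gS unfolding cntw_def by blast
  then show ?thesis unfolding linrec_def using q(1) by blast
qed

lemma regfun_comp: "regfun g \<Longrightarrow> regfun (\<lambda>w. h (g w))"
proof -
  assume "regfun g"
  then have "finite ((\<lambda>\<rho> v. h (\<rho> v)) ` range (\<lambda>u v. g (u @ v)))" unfolding regfun_def by simp
  moreover have "range (\<lambda>u v. h (g (u @ v))) = (\<lambda>\<rho> v. h (\<rho> v)) ` range (\<lambda>u v. g (u @ v))" by auto
  ultimately show ?thesis unfolding regfun_def by simp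
qed

lemma regfun_pair: "regfun g1 \<Longrightarrow> regfun g2 \<Longrightarrow> regfun (\<lambda>w. (g1 w, g2 w))"
proof -
  assume a: "regfun g1" "regfun g2"
  let ?R1 = "range (\<lambda>u v. g1 (u @ v))" and ?R2 = "range (\<lambda>u v. g2 (u @ v))"
  have "finite ((\<lambda>(a,b) v. (a v, b v)) ` (?R1 \<times> ?R2))" using a unfolding regfun_def by simp
  moreover have "range (\<lambda>u v. (g1 (u @ v), g2 (u @ v))) \<subseteq> (\<lambda>(a,b) v. (a v, b v)) ` (?R1 \<times> ?R2)" by auto
  ultimately show ?thesis unfolding regfun_def by (rule finite_subset[rotated])
qed

lemma regfun_hom:
  assumes "finite (range h)" "\<And>u v. h (u @ v) = f (h u) (h v)"
  shows "regfun h"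
proof -
  have "range (\<lambda>u v. h (u @ v)) \<subseteq> (\<lambda>a v. f a (h v)) ` range h" using assms(2) by auto
  moreover have "finite ((\<lambda>a v. f a (h v)) ` range h)" using assms(1) by simp
  ultimately show ?thesis unfolding regfun_def by (rule finite_subset)
qed

lemma regfun_take: "regfun (\<lambda>w::'b::finite list. take K w)"
proof -
  have "range (\<lambda>(u::'b list) v. take K (u @ v)) \<subseteq> (\<lambda>t v. t @ take (K - length t) v) ` {xs :: 'b list. set xs \<subseteq> UNIV \<and> length xs \<le> K}"
  proof
    fix x :: "'b list \<Rightarrow> 'b list" assume "x \<in> range (\<lambda>u v. take K (u @ v))"
    then obtain u :: "'b list" where x: "x = (\<lambda>v. take K (u @ v))" by auto
    have "x = (\<lambda>v. take K u @ take (K - length (take K u)) v)"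
      unfolding x by (auto simp: take_append min_def)
    then show "x \<in> (\<lambda>t v. t @ take (K - length t) v) ` {xs. set xs \<subseteq> UNIV \<and> length xs \<le> K}"
      by (rule image_eqI[where x="take K u"]) simp
  qed
  then show ?thesis unfolding regfun_def
    by (rule finite_subset) (intro finite_imageI finite_lists_length_le, simp)
qed

lemma drop_lastK: "drop (length (u @ v) - K) (u @ v) = drop (length (drop (length u - K) u @ v) - K) (drop (length u - K) u @ v)"
proof (cases "length u \<le> K")
  case True then show ?thesis by simp
next
  case False
  have "drop (length (u @ v) - K) (u @ v) = drop (length v) (drop (length u - K) (u @ v))"
    using False by (simp add: add.commute)
  also have "drop (length u - K) (u @ v) = drop (length u - K) u @ v" by simp
  finally show ?thesis using False by simp
qed

lemma regfun_lastK: "regfun (\<lambda>w::'b::finite list. drop (length w - K) w)"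
proof -
  have "range (\<lambda>(u::'b list) v. drop (length (u @ v) - K) (u @ v)) \<subseteq> (\<lambda>t v. drop (length (t @ v) - K) (t @ v)) ` {xs :: 'b list. set xs \<subseteq> UNIV \<and> length xs \<le> K}"
  proof
    fix x :: "'b list \<Rightarrow> 'b list" assume "x \<in> range (\<lambda>u v. drop (length (u @ v) - K) (u @ v))"
    then obtain u :: "'b list" where x: "x = (\<lambda>v. drop (length (u @ v) - K) (u @ v))" by auto
    have "x = (\<lambda>v. drop (length (drop (length u - K) u @ v) - K) (drop (length u - K) u @ v))"
      unfolding x by (rule ext, rule drop_lastK)
    then show "x \<in> (\<lambda>t v. drop (length (t @ v) - K) (t @ v)) ` {xs. set xs \<subseteq> UNIV \<and> length xs \<le> K}"
      by (rule image_eqI[where x="drop (length u - K) u"]) simp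
  qed
  then show ?thesis unfolding regfun_def
    by (rule finite_subset) (intro finite_imageI finite_lists_length_le, simp)
qed

lemma regfun_drop: "regfun g \<Longrightarrow> regfun (\<lambda>w. g (drop R w))"
proof -
  assume a: "regfun g"
  have "range (\<lambda>u v. g (drop R (u @ v))) \<subseteq> range (\<lambda>u v. g (u @ v)) \<union> (\<lambda>j v. g (drop j v)) ` {..R}"
  proof
    fix x assume "x \<in> range (\<lambda>u v. g (drop R (u @ v)))"
    then obtain u where x: "x = (\<lambda>v. g (drop R (u @ v)))" by auto
    show "x \<in> range (\<lambda>u v. g (u @ v)) \<union> (\<lambda>j v. g (drop j v)) ` {..R}"
    proof (cases "length u \<ge> R")
      case True
      then have "x = (\<lambda>v. g (drop R u @ v))" unfolding x by simp
      then show ?thesis by blast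
    next
      case False
      then have "x = (\<lambda>v. g (drop (R - length u) v))" unfolding x by simp
      then show ?thesis by auto
    qed
  qed
  moreover have "finite (range (\<lambda>u v. g (u @ v)) \<union> (\<lambda>j v. g (drop j v)) ` {..R})"
    using a unfolding regfun_def by simp
  ultimately show ?thesis unfolding regfun_def by (rule finite_subset)
qed

lemma regfun_range: "regfun g \<Longrightarrow> finite (range g)"
proof -
  assume "regfun g"
  then have "finite ((\<lambda>\<rho>. \<rho> []) ` range (\<lambda>u v. g (u @ v)))" unfolding regfun_def by simp
  moreover have "range g = (\<lambda>\<rho>. \<rho> []) ` range (\<lambda>u v. g (u @ v))" by (auto simp: image_iff)
  ultimately show ?thesis by simp
qed

lemma regfun_takeminus:
  fixes g :: "'x list \<Rightarrow> 'y"
  shows "regfun g \<Longrightarrow> regfun (\<lambda>w. g (take (length w - k) w))"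
proof -
  assume a: "regfun g"
  define \<Phi> :: "('x list \<Rightarrow> 'y) \<times> 'y list \<Rightarrow> 'x list \<Rightarrow> 'y" where "\<Phi> = (\<lambda>(\<rho>, l) v. if length v \<ge> k then \<rho> (take (length v - k) v) else l ! (k - length v))"
  have "range (\<lambda>u v. g (take (length (u @ v) - k) (u @ v))) \<subseteq>
        \<Phi> ` (range (\<lambda>u v. g (u @ v)) \<times> {l. set l \<subseteq> range g \<and> length l = Suc k})"
  proof
    fix x assume "x \<in> range (\<lambda>u v. g (take (length (u @ v) - k) (u @ v)))"
    then obtain u where x: "x = (\<lambda>v. g (take (length (u @ v) - k) (u @ v)))" by auto
    define l where "l = map (\<lambda>j. g (take (length u - j) u)) [0..<Suc k]"
    have "x = \<Phi> ((\<lambda>v. g (u @ v)), l)"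
    proof
      fix v
      show "x v = \<Phi> (\<lambda>v. g (u @ v), l) v"
      proof (cases "length v \<ge> k")
        case True then show ?thesis unfolding x \<Phi>_def by (simp add: take_append)
      next
        case False
        then have "take (length (u @ v) - k) (u @ v) = take (length u - (k - length v)) u"
          by (simp add: take_append)
        then show ?thesis unfolding x \<Phi>_def l_def using False by (simp del: upt_Suc)
      qed
    qed
    moreover have "l \<in> {l. set l \<subseteq> range g \<and> length l = Suc k}" unfolding l_def by auto
    ultimately show "x \<in> \<Phi> ` (range (\<lambda>u v. g (u @ v)) \<times> {l. set l \<subseteq> range g \<and> length l = Suc k})" by blast
  qed
  moreover have "finite (\<Phi> ` (range (\<lambda>u v. g (u @ v)) \<times> {l. set l \<subseteq> range g \<and> length l = Suc k}))"
  proof -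
    have "finite (range (\<lambda>u v. g (u @ v)))" using a unfolding regfun_def .
    moreover have "finite {l. set l \<subseteq> range g \<and> length l = Suc k}"
      by (rule finite_lists_length_eq[OF regfun_range[OF a]])
    ultimately show ?thesis by simp
  qed
  ultimately show ?thesis unfolding regfun_def by (simp add: finite_subset)
qed

lemma regfun_map: "regfun g \<Longrightarrow> regfun (\<lambda>w. g (map f w))"
proof -
  assume a: "regfun g"
  have "range (\<lambda>u v. g (map f (u @ v))) \<subseteq> (\<lambda>\<rho> v. \<rho> (map f v)) ` range (\<lambda>u v. g (u @ v))" by auto
  moreover have "finite ((\<lambda>\<rho> v. \<rho> (map f v)) ` range (\<lambda>u v. g (u @ v)))"
    using a unfolding regfun_def by simp
  ultimately show ?thesis unfolding regfun_def by (rule finite_subset)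
qed

definition LocOK :: "('b list \<Rightarrow> bool) \<Rightarrow> nat \<Rightarrow> 'b list \<Rightarrow> bool" where
  "LocOK P K w \<longleftrightarrow> (\<forall>q. q + K \<le> length w \<longrightarrow> P (take K (drop q w)))"

lemma LocOK_append:
  assumes "K \<ge> 1"
  shows "LocOK P K (u @ v) \<longleftrightarrow> LocOK P K u \<and> LocOK P K (drop (length u - (K - 1)) u @ v)"
proof -
  define t where "t = drop (length u - (K - 1)) u"
  define u0 where "u0 = take (length u - (K - 1)) u"
  have u: "u = u0 @ t" unfolding t_def u0_def by simp
  have lu0: "length u0 = length u - (K - 1)" unfolding u0_def by simp
  have w1: "take K (drop q (u @ v)) = take K (drop q u)" if "q + K \<le> length u" for q
  proof -
    have "drop q (u @ v) = drop q u @ v" using that by simp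
    moreover have "K \<le> length (drop q u)" using that by simp
    ultimately show ?thesis by simp
  qed
  have w2: "take K (drop (length u0 + q) (u @ v)) = take K (drop q (t @ v))" for q
    unfolding u by simp
  show ?thesis
  proof
    assume L: "LocOK P K (u @ v)"
    have "LocOK P K u" unfolding LocOK_def
    proof (intro allI impI)
      fix q assume "q + K \<le> length u"
      moreover have "q + K \<le> length (u @ v)" using \<open>q + K \<le> length u\<close> by simp
      then have "P (take K (drop q (u @ v)))" using L unfolding LocOK_def by blast
      ultimately show "P (take K (drop q u))" using w1[of q] by simp
    qed
    moreover have "LocOK P K (t @ v)" unfolding LocOK_def
    proof (intro allI impI)
      fix q assume q: "q + K \<le> length (t @ v)"
      have "length u0 + q + K \<le> length (u @ v)" using q u by simp
      then show "P (take K (drop q (t @ v)))" using L w2[of q] unfolding LocOK_def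
        by (metis add.commute add.left_commute)
    qed
    ultimately show "LocOK P K u \<and> LocOK P K (drop (length u - (K - 1)) u @ v)" unfolding t_def by simp
  next
    assume R: "LocOK P K u \<and> LocOK P K (drop (length u - (K - 1)) u @ v)"
    show "LocOK P K (u @ v)" unfolding LocOK_def
    proof (intro allI impI)
      fix q assume q: "q + K \<le> length (u @ v)"
      show "P (take K (drop q (u @ v)))"
      proof (cases "q + K \<le> length u")
        case True
        then have "P (take K (drop q u))" using R unfolding LocOK_def by blast
        then show ?thesis by (simp only: w1[OF True])
      next
        case False
        then have "q \<ge> length u0" using lu0 assms by simp
        then obtain q' where q': "q = length u0 + q'" using le_Suc_ex by blast
        have "q' + K \<le> length (t @ v)" using q q' u by simp
        then show ?thesis using R w2[of q'] q' unfolding LocOK_def t_def by auto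
      qed
    qed
  qed
qed

lemma regfun_LocOK:
  assumes "K \<ge> 1"
  shows "regfun (LocOK P K :: 'b::finite list \<Rightarrow> bool)"
proof -
  have "range (\<lambda>u v. LocOK P K (u @ v)) \<subseteq> (\<lambda>(b, t) v. b \<and> LocOK P K (t @ v)) ` (UNIV \<times> {xs :: 'b list. set xs \<subseteq> UNIV \<and> length xs \<le> K - 1})"
  proof
    fix x :: "'b list \<Rightarrow> bool" assume "x \<in> range (\<lambda>u v. LocOK P K (u @ v))"
    then obtain u :: "'b list" where x: "x = (\<lambda>v. LocOK P K (u @ v))" by auto
    have "x v = (LocOK P K u \<and> LocOK P K (drop (length u - (K - 1)) u @ v))" for v
      unfolding x by (rule LocOK_append[OF assms])
    then have "x = (\<lambda>(b, t) v. b \<and> LocOK P K (t @ v)) (LocOK P K u, drop (length u - (K - 1)) u)"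
      by auto
    then show "x \<in> (\<lambda>(b, t) v. b \<and> LocOK P K (t @ v)) ` (UNIV \<times> {xs. set xs \<subseteq> UNIV \<and> length xs \<le> K - 1})"
      by (rule image_eqI[where x="(LocOK P K u, drop (length u - (K - 1)) u)"]) auto
  qed
  moreover have "finite ((\<lambda>(b, t) v. b \<and> LocOK P K (t @ v)) ` (UNIV \<times> {xs :: 'b list. set xs \<subseteq> UNIV \<and> length xs \<le> K - 1}))"
    by (intro finite_imageI finite_cartesian_product finite_lists_length_le) simp_all
  ultimately show ?thesis unfolding regfun_def by (rule finite_subset)
qed


fun RelG :: "nat set \<Rightarrow> (nat \<Rightarrow> nat) \<Rightarrow> (nat \<Rightarrow> nat) \<Rightarrow> (nat \<Rightarrow> 'a) \<Rightarrow> 'a list \<Rightarrow> (nat \<times> nat) set" where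
  "RelG E src tgt lab [] = Id"
| "RelG E src tgt lab (a # u) = {(s,t). \<exists>e\<in>E. lab e = a \<and> src e = s \<and> (tgt e, t) \<in> RelG E src tgt lab u}"

lemma RelG_append: "RelG E src tgt lab (u @ v) = RelG E src tgt lab u O RelG E src tgt lab v"
  by (induction u) auto

lemma RelG_sub: "u \<noteq> [] \<Longrightarrow> RelG E src tgt lab u \<subseteq> (src ` E \<union> tgt ` E) \<times> (src ` E \<union> tgt ` E)"
proof (induction u)
  case Nil then show ?case by simp
next
  case (Cons a u)
  show ?case
  proof
    fix p assume p: "p \<in> RelG E src tgt lab (a # u)"
    obtain s t where st: "p = (s, t)" by (cases p)
    obtain e where e: "e \<in> E" "lab e = a" "src e = s" "(tgt e, t) \<in> RelG E src tgt lab u"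
      using p st by auto
    have "t \<in> src ` E \<union> tgt ` E"
    proof (cases "u = []")
      case True then show ?thesis using e by auto
    next
      case False then show ?thesis using Cons.IH e(4) by blast
    qed
    then show "p \<in> (src ` E \<union> tgt ` E) \<times> (src ` E \<union> tgt ` E)" using e st by auto
  qed
qed

lemma RelG_finite_range: "finite E \<Longrightarrow> finite (range (RelG E src tgt lab))"
proof -
  assume fE: "finite E"
  have "range (RelG E src tgt lab) \<subseteq> insert Id (Pow ((src ` E \<union> tgt ` E) \<times> (src ` E \<union> tgt ` E)))"
  proof
    fix A assume "A \<in> range (RelG E src tgt lab)"
    then obtain u where u: "A = RelG E src tgt lab u" by auto
    show "A \<in> insert Id (Pow ((src ` E \<union> tgt ` E) \<times> (src ` E \<union> tgt ` E)))"
    proof (cases "u = []")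
      case True then show ?thesis using u by simp
    next
      case False then show ?thesis using u RelG_sub[OF False, of E src tgt lab] by simp
    qed
  qed
  moreover have "finite (insert Id (Pow ((src ` E \<union> tgt ` E) \<times> (src ` E \<union> tgt ` E))))" using fE by simp
  ultimately show ?thesis by (rule finite_subset)
qed

lemma RelG_replicate: "RelG E src tgt lab (concat (replicate j w)) = (RelG E src tgt lab w) ^^ j"
proof (induction j)
  case (Suc j)
  then show ?case by (simp add: RelG_append relpow_commute)
qed simp

definition seg :: "(int \<Rightarrow> 'a) \<Rightarrow> int \<Rightarrow> nat \<Rightarrow> 'a list" where
  "seg x c L = map (\<lambda>k. x (c + int k)) [0..<L]"

lemma length_seg[simp]: "length (seg x c L) = L" by (simp add: seg_def)
lemma nth_seg[simp]: "k < L \<Longrightarrow> seg x c L ! k = x (c + int k)" by (simp add: seg_def)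

lemma seg_Suc: "seg x c (Suc L) = x c # seg x (c + 1) L"
proof (rule nth_equalityI)
  fix k assume "k < length (seg x c (Suc L))"
  then show "seg x c (Suc L) ! k = (x c # seg x (c + 1) L) ! k"
    by (cases k) (auto simp: algebra_simps)
qed simp

lemma seg_add: "seg x c (L1 + L2) = seg x c L1 @ seg x (c + int L1) L2"
proof (rule nth_equalityI)
  fix k assume "k < length (seg x c (L1 + L2))"
  then show "seg x c (L1 + L2) ! k = (seg x c L1 @ seg x (c + int L1) L2) ! k"
    by (auto simp: nth_append algebra_simps of_nat_diff)
qed simp

lemma periodic_int:
  assumes "\<And>i. x (i + int P) = x i"
  shows "x (i + z * int P) = x i"
proof -
  have pos: "x (i + int n * int P) = x i" for i n
  proof (induction n arbitrary: i)
    case (Suc n)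
    have "x (i + int (Suc n) * int P) = x ((i + int n * int P) + int P)" by (simp add: algebra_simps)
    then show ?case using Suc assms by simp
  qed simp
  show ?thesis
  proof (cases "z \<ge> 0")
    case True then show ?thesis using pos[of i "nat z"] by simp
  next
    case False
    then show ?thesis using pos[of "i + z * int P" "nat (-z)"] by simp
  qed
qed

lemma seg_periodic:
  assumes "\<And>i. x (i + int m) = x i"
  shows "seg x c (j * m) = concat (replicate j (seg x c m))"
proof (induction j arbitrary: c)
  case (Suc j)
  have "seg x c (Suc j * m) = seg x c m @ seg x (c + int m) (j * m)"
    by (simp add: seg_add[symmetric] add_ac)
  also have "seg x (c + int m) (j * m) = seg x c (j * m)"
    unfolding seg_def using assms by (simp add: add_ac) (metis add.assoc add.commute)
  finally show ?case using Suc by simp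
qed (simp add: seg_def)

lemma path_RelG:
  assumes "\<And>i. \<xi> i \<in> E \<and> tgt (\<xi> i) = src (\<xi> (i + 1))" "\<And>i. x i = lab (\<xi> i)"
  shows "(src (\<xi> c), src (\<xi> (c + int L))) \<in> RelG E src tgt lab (seg x c L)"
proof (induction L arbitrary: c)
  case 0 then show ?case by (simp add: seg_def)
next
  case (Suc L)
  have "(src (\<xi> (c + 1)), src (\<xi> (c + 1 + int L))) \<in> RelG E src tgt lab (seg x (c + 1) L)" by (rule Suc)
  then show ?case unfolding seg_Suc using assms by (auto simp: add_ac intro!: bexI[of _ "\<xi> c"])
qed

lemma RelG_extract:
  "(s, t) \<in> RelG E src tgt lab u \<Longrightarrow> u \<noteq> [] \<Longrightarrow>
   \<exists>es. length es = length u \<and> (\<forall>k<length u. es ! k \<in> E \<and> lab (es ! k) = u ! k) \<and>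
        (\<forall>k. Suc k < length u \<longrightarrow> tgt (es ! k) = src (es ! Suc k)) \<and>
        src (es ! 0) = s \<and> tgt (es ! (length u - 1)) = t"
proof (induction u arbitrary: s)
  case Nil then show ?case by simp
next
  case (Cons a u)
  then obtain e where e: "e \<in> E" "lab e = a" "src e = s" "(tgt e, t) \<in> RelG E src tgt lab u" by auto
  show ?case
  proof (cases "u = []")
    case True
    then show ?thesis using e by (intro exI[of _ "[e]"]) auto
  next
    case False
    from Cons.IH[OF e(4) False] obtain es where es:
      "length es = length u" "\<forall>k<length u. es ! k \<in> E \<and> lab (es ! k) = u ! k"
      "\<forall>k. Suc k < length u \<longrightarrow> tgt (es ! k) = src (es ! Suc k)"
      "src (es ! 0) = tgt e" "tgt (es ! (length u - 1)) = t" by blast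
    show ?thesis
    proof (intro exI[of _ "e # es"] conjI allI impI)
      show "\<And>k. k < length (a # u) \<Longrightarrow> (e # es) ! k \<in> E"
        using es e by (case_tac k) auto
      show "\<And>k. k < length (a # u) \<Longrightarrow> lab ((e # es) ! k) = (a # u) ! k"
        using es e by (case_tac k) auto
      show "\<And>k. Suc k < length (a # u) \<Longrightarrow> tgt ((e # es) ! k) = src ((e # es) ! Suc k)"
        using es e by (case_tac k) auto
      show "tgt ((e # es) ! (length (a # u) - 1)) = t"
        using es False by (cases u) auto
    qed (use es e in auto)
  qed
qed

definition paths_shift :: "nat set \<Rightarrow> (nat \<Rightarrow> nat) \<Rightarrow> (nat \<Rightarrow> nat) \<Rightarrow> (nat \<Rightarrow> 'a) \<Rightarrow> (int \<Rightarrow> 'a) set" where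
  "paths_shift E src tgt lab = {x. \<exists>\<xi>::int \<Rightarrow> nat. (\<forall>i. \<xi> i \<in> E \<and> tgt (\<xi> i) = src (\<xi> (i + 1))) \<and> (\<forall>i. x i = lab (\<xi> i))}"

theorem periodic_criterion:
  assumes fE: "finite E" and m: "m > 0" and per: "\<And>i. x (i + int m) = x i"
  shows "x \<in> paths_shift E src tgt lab \<longleftrightarrow> (\<exists>s. (s, s) \<in> (RelG E src tgt lab (seg x c m))\<^sup>+)"
proof
  assume "x \<in> paths_shift E src tgt lab"
  then obtain \<xi> where \<xi>: "\<And>i. \<xi> i \<in> E \<and> tgt (\<xi> i) = src (\<xi> (i + 1))" "\<And>i. x i = lab (\<xi> i)"
    unfolding paths_shift_def by blast
  define f where "f k = src (\<xi> (c + int (k * m)))" for k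
  have "\<not> inj_on f {..card (src ` E)}"
  proof
    assume inj: "inj_on f {..card (src ` E)}"
    have "f ` {..card (src ` E)} \<subseteq> src ` E" unfolding f_def using \<xi>(1) by auto
    then have "card {..card (src ` E)} \<le> card (src ` E)"
      using card_inj_on_le[OF inj] fE by blast
    then show False by simp
  qed
  then obtain a b where ab: "a \<noteq> b" "f a = f b" unfolding inj_on_def by auto
  have ex: "\<exists>a b. a < b \<and> f a = f b"
  proof (cases "a < b")
    case True then show ?thesis using ab by blast
  next
    case False then have "b < a" using ab by simp
    then show ?thesis using ab by metis
  qed
  then obtain a b where ab: "a < b" "f a = f b" by blast
  define R where "R = RelG E src tgt lab (seg x c m)"
  have P0: "(src (\<xi> (c + int (a * m))), src (\<xi> (c + int (a * m) + int ((b - a) * m)))) \<in> RelG E src tgt lab (seg x (c + int (a * m)) ((b - a) * m))"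
    by (rule path_RelG[where \<xi>=\<xi> and x=x, OF \<xi>])
  have eq: "c + int (a * m) + int ((b - a) * m) = c + int (b * m)"
    using ab by (simp add: diff_mult_distrib of_nat_diff)
  have "(f a, f b) \<in> RelG E src tgt lab (seg x (c + int (a * m)) ((b - a) * m))"
    using P0 unfolding eq f_def .
  moreover have "seg x (c + int (a * m)) m = seg x c m"
  proof -
    have "x (c + int (a * m) + int k) = x (c + int k)" for k
      using periodic_int[of x m, OF per, of "c + int k" "int a"] by (simp add: add_ac)
    then show ?thesis unfolding seg_def by simp
  qed
  ultimately have "(f a, f b) \<in> R ^^ (b - a)"
    unfolding f_def R_def by (simp add: seg_periodic[of x m, OF per] RelG_replicate)
  then have "(f a, f a) \<in> R\<^sup>+" using ab unfolding trancl_power by (intro exI[of _ "b - a"]) simp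
  then show "\<exists>s. (s, s) \<in> (RelG E src tgt lab (seg x c m))\<^sup>+" unfolding R_def by blast
next
  assume "\<exists>s. (s, s) \<in> (RelG E src tgt lab (seg x c m))\<^sup>+"
  then obtain s n where n: "n > 0" "(s, s) \<in> (RelG E src tgt lab (seg x c m)) ^^ n"
    by (auto simp: trancl_power)
  define L where "L = n * m"
  have L0: "L > 0" using n m unfolding L_def by simp
  have "(s, s) \<in> RelG E src tgt lab (seg x c L)"
    using n unfolding L_def by (simp add: seg_periodic[of x m, OF per] RelG_replicate)
  moreover have "seg x c L \<noteq> []" using L0 by (simp add: seg_def)
  ultimately obtain es where es: "length es = L" "\<forall>k<L. es ! k \<in> E \<and> lab (es ! k) = x (c + int k)"
      "\<forall>k. Suc k < L \<longrightarrow> tgt (es ! k) = src (es ! Suc k)"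
      "src (es ! 0) = s" "tgt (es ! (L - 1)) = s"
    using RelG_extract[of s s E src tgt lab "seg x c L"] by auto
  have perL: "x (i + int L) = x i" for i
    using periodic_int[of x m, OF per, of i "int n"] unfolding L_def by (simp add: mult.commute)
  define \<xi> where "\<xi> i = es ! nat ((i - c) mod int L)" for i
  have idx: "nat ((i - c) mod int L) < L" for i using L0 by (simp add: nat_less_iff)
  have "\<forall>i. \<xi> i \<in> E \<and> tgt (\<xi> i) = src (\<xi> (i + 1))"
  proof
    fix i
    define k where "k = nat ((i - c) mod int L)"
    have kL: "k < L" unfolding k_def by (rule idx)
    have "\<xi> i \<in> E" using es(2) kL unfolding \<xi>_def k_def by blast
    moreover have "tgt (\<xi> i) = src (\<xi> (i + 1))"
    proof (cases "Suc k < L")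
      case True
      have "(i + 1 - c) mod int L = ((i - c) mod int L + 1) mod int L" by (simp add: mod_simps algebra_simps)
      also have "\<dots> = (i - c) mod int L + 1" using True unfolding k_def
        by (intro mod_pos_pos_trivial) (use L0 in auto)
      moreover have "(i - c) mod int L \<ge> 0" using L0 by simp
      ultimately have "nat ((i + 1 - c) mod int L) = Suc k" unfolding k_def by (simp add: nat_add_distrib)
      then show ?thesis using es(3) True unfolding \<xi>_def k_def by simp
    next
      case False
      then have kk: "k = L - 1" using kL by simp
      have "(i + 1 - c) mod int L = ((i - c) mod int L + 1) mod int L" by (simp add: mod_simps algebra_simps)
      also have "(i - c) mod int L + 1 = int L"
      proof -
        have "(i - c) mod int L \<ge> 0" using L0 by simp
        then have "(i - c) mod int L = int k" unfolding k_def by simp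
        then show ?thesis using kk L0 by (simp add: of_nat_diff)
      qed
      finally have "nat ((i + 1 - c) mod int L) = 0" by simp
      then show ?thesis using es(4,5) kk unfolding \<xi>_def k_def by simp
    qed
    ultimately show "\<xi> i \<in> E \<and> tgt (\<xi> i) = src (\<xi> (i + 1))" by blast
  qed
  moreover have "\<forall>i. x i = lab (\<xi> i)"
  proof
    fix i
    define k where "k = nat ((i - c) mod int L)"
    have kL: "k < L" unfolding k_def by (rule idx)
    have "i = c + int k + ((i - c) div int L) * int L"
      unfolding k_def using L0 by (simp add: div_mod_decomp_int[symmetric] algebra_simps)
    then have "x i = x (c + int k)" using periodic_int[of x L, OF perL] by metis
    then show "x i = lab (\<xi> i)" using es(2) kL unfolding \<xi>_def k_def by simp
  qed
  ultimately show "x \<in> paths_shift E src tgt lab" unfolding paths_shift_def by blast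
qed


definition cyl :: "(int \<Rightarrow> 'a) \<Rightarrow> nat \<Rightarrow> (int \<Rightarrow> 'a) set" where
  "cyl x r = {y. \<forall>i. \<bar>i\<bar> \<le> int r \<longrightarrow> y i = x i}"

lemma PiE_UNIV_eq: "PiE (UNIV::'i set) A = {f. \<forall>i. f i \<in> A i}"
  by (auto simp: PiE_def Pi_def)

lemma openin_cyl: "openin full_shift_topology (cyl x r)"
  unfolding full_shift_topology_def openin_product_topology_alt
proof (intro ballI)
  fix y assume y: "y \<in> cyl x r"
  define U where "U i = (if \<bar>i\<bar> \<le> int r then {x i} else UNIV)" for i
  have "{i. U i \<noteq> UNIV} \<subseteq> {-int r..int r}" unfolding U_def by auto
  then have "finite {i \<in> UNIV. U i \<noteq> topspace (discrete_topology UNIV)}"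
    by (simp add: finite_subset)
  moreover have "y \<in> PiE UNIV U" using y unfolding U_def cyl_def PiE_UNIV_eq by auto
  moreover have "PiE UNIV U \<subseteq> cyl x r" unfolding U_def cyl_def PiE_UNIV_eq by auto
  ultimately show "\<exists>U. finite {i \<in> UNIV. U i \<noteq> topspace (discrete_topology UNIV)} \<and>
         (\<forall>i\<in>UNIV. openin (discrete_topology UNIV) (U i)) \<and> y \<in> PiE UNIV U \<and> PiE UNIV U \<subseteq> cyl x r"
    by auto
qed

lemma open_contains_cyl:
  assumes "openin full_shift_topology U" "x \<in> U"
  shows "\<exists>r. cyl x r \<subseteq> U"
proof -
  obtain V where V: "finite {i \<in> UNIV. V i \<noteq> topspace (discrete_topology UNIV)}" "x \<in> PiE UNIV V" "PiE UNIV V \<subseteq> U"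
    using assms unfolding full_shift_topology_def openin_product_topology_alt by blast
  define J where "J = {i. V i \<noteq> UNIV}"
  have fJ: "finite J" using V(1) unfolding J_def by simp
  define r where "r = Max (insert 0 ((\<lambda>i. nat \<bar>i\<bar>) ` J))"
  have rJ: "\<bar>i\<bar> \<le> int r" if "i \<in> J" for i
  proof -
    have "nat \<bar>i\<bar> \<le> r" unfolding r_def using fJ that by (intro Max_ge) auto
    then show ?thesis by simp
  qed
  have "cyl x r \<subseteq> PiE UNIV V"
  proof
    fix y assume y: "y \<in> cyl x r"
    show "y \<in> PiE UNIV V" unfolding PiE_UNIV_eq
    proof
      show "\<forall>i. y i \<in> V i"
      proof
        fix i show "y i \<in> V i"
        proof (cases "i \<in> J")
          case True
          then have "y i = x i" using y rJ unfolding cyl_def by auto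
          then show ?thesis using V(2) unfolding PiE_UNIV_eq by auto
        next
          case False then show ?thesis unfolding J_def by auto
        qed
      qed
    qed
  qed
  then show ?thesis using V(3) by blast
qed

lemma compact_paths:
  assumes fE: "finite E"
  shows "compactin full_shift_topology (paths_shift E src tgt lab)"
proof -
  define TE where "TE = product_topology (\<lambda>_::int. discrete_topology E) UNIV"
  define P where "P = {\<xi>::int \<Rightarrow> nat. (\<forall>i. \<xi> i \<in> E \<and> tgt (\<xi> i) = src (\<xi> (i + 1)))}"
  have top: "topspace TE = {\<xi>. \<forall>i. \<xi> i \<in> E}" unfolding TE_def by (simp add: PiE_UNIV_eq)
  have cs: "compact_space TE" unfolding TE_def
    using fE by (simp add: compact_space_product_topology compact_space_discrete_topology)
  have "openin TE (topspace TE - P)"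
    unfolding TE_def openin_product_topology_alt
  proof (intro ballI)
    fix \<xi> assume "\<xi> \<in> topspace (product_topology (\<lambda>_. discrete_topology E) UNIV) - P"
    then have \<xi>: "\<forall>i. \<xi> i \<in> E" "\<not> (\<forall>i. tgt (\<xi> i) = src (\<xi> (i + 1)))"
      unfolding P_def by (auto simp: PiE_UNIV_eq)
    then obtain i where i: "tgt (\<xi> i) \<noteq> src (\<xi> (i + 1))" by blast
    define U where "U j = (if j = i \<or> j = i + 1 then {\<xi> j} else E)" for j
    have "{j. U j \<noteq> E} \<subseteq> {i, i + 1}" unfolding U_def by auto
    then have "finite {j \<in> UNIV. U j \<noteq> topspace (discrete_topology E)}" by (simp add: finite_subset)
    moreover have "\<forall>j\<in>UNIV. openin (discrete_topology E) (U j)" using \<xi> unfolding U_def by auto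
    moreover have "\<xi> \<in> PiE UNIV U" using \<xi> unfolding U_def PiE_UNIV_eq by auto
    moreover have "PiE UNIV U \<subseteq> topspace (product_topology (\<lambda>_. discrete_topology E) UNIV) - P"
    proof
      fix \<eta> assume "\<eta> \<in> PiE UNIV U"
      then have \<eta>: "\<forall>j. \<eta> j \<in> U j" unfolding PiE_UNIV_eq by simp
      then have e1: "\<eta> i = \<xi> i" "\<eta> (i + 1) = \<xi> (i + 1)" unfolding U_def by (metis singletonD)+
      have e2: "\<forall>j. \<eta> j \<in> E" using \<eta> \<xi> unfolding U_def by (metis singletonD)
      have "tgt (\<eta> i) \<noteq> src (\<eta> (i + 1))" using i e1 by simp
      then show "\<eta> \<in> topspace (product_topology (\<lambda>_. discrete_topology E) UNIV) - P"
        using e2 unfolding P_def by (auto simp: PiE_UNIV_eq)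
    qed
    ultimately show "\<exists>U. finite {j \<in> UNIV. U j \<noteq> topspace (discrete_topology E)} \<and>
        (\<forall>j\<in>UNIV. openin (discrete_topology E) (U j)) \<and> \<xi> \<in> PiE UNIV U \<and>
        PiE UNIV U \<subseteq> topspace (product_topology (\<lambda>_. discrete_topology E) UNIV) - P"
      by blast
  qed
  moreover have "P \<subseteq> topspace TE" unfolding top P_def by auto
  ultimately have "closedin TE P" unfolding closedin_def by (simp add: Diff_Diff_Int inf.absorb2)
  then have cP: "compactin TE P" using closedin_compact_space[OF cs] by blast
  have cont: "continuous_map TE full_shift_topology (\<lambda>\<xi> i. lab (\<xi> i))"
    unfolding full_shift_topology_def continuous_map_componentwise_UNIV
  proof
    fix k
    have "continuous_map TE (discrete_topology E) (\<lambda>\<xi>. \<xi> k)"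
      unfolding TE_def by (rule continuous_map_product_projection) simp
    moreover have "continuous_map (discrete_topology E) (discrete_topology UNIV) lab" by simp
    ultimately show "continuous_map TE (discrete_topology UNIV) (\<lambda>\<xi>. lab (\<xi> k))"
      using continuous_map_compose[of TE "discrete_topology E" "\<lambda>\<xi>. \<xi> k" "discrete_topology UNIV" lab]
      by (simp add: o_def)
  qed
  have "(\<lambda>\<xi> i. lab (\<xi> i)) ` P = paths_shift E src tgt lab"
    unfolding P_def paths_shift_def by auto
  then show ?thesis using image_compactin[OF cP cont] by simp
qed

lemma flip_local:
  assumes fE: "finite E" and X: "X = paths_shift E src tgt lab"
    and cont: "continuous_map (subtopology full_shift_topology X) (subtopology full_shift_topology X) \<phi>"
  shows "\<exists>r. \<forall>y\<in>X. \<forall>z\<in>X. (\<forall>i. \<bar>i\<bar> \<le> int r \<longrightarrow> y i = z i) \<longrightarrow> \<phi> y 0 = \<phi> z 0"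
proof -
  have topT: "topspace full_shift_topology = UNIV"
    unfolding full_shift_topology_def by (simp add: PiE_UNIV_eq)
  have loc: "\<exists>r. \<forall>y\<in>X. y \<in> cyl x r \<longrightarrow> \<phi> y 0 = \<phi> x 0" if x: "x \<in> X" for x
  proof -
    have o1: "openin full_shift_topology {z. z 0 = \<phi> x 0}"
    proof -
      have "continuous_map full_shift_topology (discrete_topology UNIV) (\<lambda>z. z 0)"
        unfolding full_shift_topology_def by (rule continuous_map_product_projection) simp
      from openin_continuous_map_preimage[OF this, of "{\<phi> x 0}"]
      show ?thesis using topT by (simp add: topT)
    qed
    then have "openin (subtopology full_shift_topology X) ({z. z 0 = \<phi> x 0} \<inter> X)"
      unfolding openin_subtopology by blast
    have eqset: "{y \<in> topspace (subtopology full_shift_topology X). \<phi> y \<in> {z. z 0 = \<phi> x 0} \<inter> X}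
       = {y \<in> X. \<phi> y \<in> {z. z 0 = \<phi> x 0} \<inter> X}" by (auto simp: topT)
    have "openin (subtopology full_shift_topology X) {y \<in> X. \<phi> y \<in> {z. z 0 = \<phi> x 0} \<inter> X}"
      using openin_continuous_map_preimage[OF cont \<open>openin (subtopology full_shift_topology X) ({z. z 0 = \<phi> x 0} \<inter> X)\<close>]
      unfolding eqset .
    then obtain U where U: "openin full_shift_topology U" "{y \<in> X. \<phi> y \<in> {z. z 0 = \<phi> x 0} \<inter> X} = U \<inter> X"
      unfolding openin_subtopology by blast
    have "\<phi> x \<in> X" using cont x unfolding continuous_map_def using topT by auto
    then have "x \<in> U" using U(2) x by blast
    then obtain r where "cyl x r \<subseteq> U" using open_contains_cyl[OF U(1)] by blast
    then show ?thesis using U(2) by blast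
  qed
  then obtain rr where rr: "\<And>x. x \<in> X \<Longrightarrow> \<forall>y\<in>X. y \<in> cyl x (rr x) \<longrightarrow> \<phi> y 0 = \<phi> x 0" by metis
  have cX: "compactin full_shift_topology X" using compact_paths[OF fE] X by simp
  have cov: "X \<subseteq> \<Union> ((\<lambda>x. cyl x (rr x)) ` X)" by (auto simp: cyl_def)
  obtain \<F> where F: "finite \<F>" "\<F> \<subseteq> (\<lambda>x. cyl x (rr x)) ` X" "X \<subseteq> \<Union>\<F>"
    using cX cov openin_cyl unfolding compactin_def by (smt (verit, best) imageE)
  obtain F0 where F0: "F0 \<subseteq> X" "finite F0" "\<F> = (\<lambda>x. cyl x (rr x)) ` F0"
    using finite_subset_image[OF F(1) F(2)] by blast
  define r where "r = Max (insert 0 (rr ` F0))"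
  have rle: "rr x \<le> r" if "x \<in> F0" for x unfolding r_def using F0(2) that by (intro Max_ge) auto
  show ?thesis
  proof (intro exI[of _ r] ballI impI)
    fix y z assume y: "y \<in> X" and z: "z \<in> X" and yz: "\<forall>i. \<bar>i\<bar> \<le> int r \<longrightarrow> y i = z i"
    obtain x where x: "x \<in> F0" "y \<in> cyl x (rr x)" using F(3) F0(3) y by auto
    have "z \<in> cyl x (rr x)" using x(2) yz rle[OF x(1)] unfolding cyl_def by force
    then show "\<phi> y 0 = \<phi> z 0" using rr[of x] x F0(1) y z by auto
  qed
qed


lemma shift_pow_apply: "shift_pow k x i = x (i + k)" by (simp add: shift_pow_def)
lemma shift_pow_shift_pow: "shift_pow a (shift_pow b x) = shift_pow (a + b) x"
  by (simp add: shift_pow_def add_ac)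
lemma shift_map_eq: "shift_map = shift_pow 1" by (simp add: shift_map_def shift_pow_def fun_eq_iff)
lemma shift_pow_0[simp]: "shift_pow 0 x = x" by (simp add: shift_pow_def)
lemma funpow_shift_map: "(shift_map ^^ m) x = shift_pow (int m) x"
  by (induction m) (auto simp: shift_map_eq shift_pow_shift_pow add_ac)

lemma seg_eq_agree:
  assumes "seg y (- int r) (2 * r + 1) = seg z (- int r) (2 * r + 1)" "\<bar>i\<bar> \<le> int r"
  shows "y i = z i"
proof -
  define k where "k = nat (i + int r)"
  have k: "k < 2 * r + 1" "- int r + int k = i" using assms(2) unfolding k_def by auto
  have "seg y (- int r) (2 * r + 1) ! k = seg z (- int r) (2 * r + 1) ! k" using assms(1) by simp
  then show ?thesis using k by simp
qed

locale flipsys =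
  fixes E :: "nat set" and src tgt :: "nat \<Rightarrow> nat" and lab :: "nat \<Rightarrow> 'a::finite"
    and \<phi> :: "(int \<Rightarrow> 'a) \<Rightarrow> (int \<Rightarrow> 'a)" and r :: nat
  assumes fE: "finite E"
    and phiX: "\<And>x. x \<in> paths_shift E src tgt lab \<Longrightarrow> \<phi> x \<in> paths_shift E src tgt lab"
    and phishift: "\<And>x. x \<in> paths_shift E src tgt lab \<Longrightarrow> \<phi> (shift_map x) = shift_pow (-1) (\<phi> x)"
    and loc: "\<And>y z. y \<in> paths_shift E src tgt lab \<Longrightarrow> z \<in> paths_shift E src tgt lab \<Longrightarrow>
               (\<forall>i. \<bar>i\<bar> \<le> int r \<longrightarrow> y i = z i) \<Longrightarrow> \<phi> y 0 = \<phi> z 0"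
begin

abbreviation "XX \<equiv> paths_shift E src tgt lab"

lemma shift_in_X: "x \<in> XX \<Longrightarrow> shift_pow k x \<in> XX"
proof -
  assume "x \<in> XX"
  then obtain \<xi> where \<xi>: "\<forall>i. \<xi> i \<in> E \<and> tgt (\<xi> i) = src (\<xi> (i + 1))" "\<forall>i. x i = lab (\<xi> i)"
    unfolding paths_shift_def by blast
  have "\<forall>i. \<xi> (i + k) \<in> E \<and> tgt (\<xi> (i + k)) = src (\<xi> (i + 1 + k))"
    using \<xi>(1) by (metis add.commute add.left_commute)
  then show ?thesis unfolding paths_shift_def using \<xi>(2)
    by (intro CollectI exI[of _ "\<lambda>i. \<xi> (i + k)"]) (auto simp: shift_pow_apply add_ac)
qed

lemma phi_shift_nat: "x \<in> XX \<Longrightarrow> \<phi> (shift_pow (int k) x) = shift_pow (- int k) (\<phi> x)"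
proof (induction k)
  case 0 then show ?case by simp
next
  case (Suc k)
  have "shift_pow (int (Suc k)) x = shift_map (shift_pow (int k) x)"
    by (simp add: shift_map_eq shift_pow_shift_pow add_ac)
  then have "\<phi> (shift_pow (int (Suc k)) x) = shift_pow (-1) (\<phi> (shift_pow (int k) x))"
    using phishift shift_in_X Suc.prems by simp
  also have "\<dots> = shift_pow (- int (Suc k)) (\<phi> x)" using Suc by (simp add: shift_pow_shift_pow add_ac)
  finally show ?case .
qed

lemma phi_shift: "x \<in> XX \<Longrightarrow> \<phi> (shift_pow z x) = shift_pow (- z) (\<phi> x)"
proof (cases "z \<ge> 0")
  case True
  assume x: "x \<in> XX"
  then show ?thesis using phi_shift_nat[OF x, of "nat z"] True by simp
next
  case False
  assume x: "x \<in> XX"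
  define k where "k = nat (- z)"
  have zk: "z = - int k" using False unfolding k_def by simp
  define y where "y = shift_pow z x"
  have y: "y \<in> XX" unfolding y_def using x by (rule shift_in_X)
  have "x = shift_pow (int k) y" unfolding y_def zk by (simp add: shift_pow_shift_pow)
  then have "\<phi> x = shift_pow (- int k) (\<phi> y)" using phi_shift_nat[OF y] by simp
  then have "shift_pow (int k) (\<phi> x) = \<phi> y" by (simp add: shift_pow_shift_pow)
  then show ?thesis unfolding y_def zk by simp
qed

definition Floc :: "'a list \<Rightarrow> 'a" where
  "Floc v = \<phi> (SOME y. y \<in> XX \<and> seg y (- int r) (2 * r + 1) = v) 0"

lemma psi: assumes x: "x \<in> XX" shows "\<phi> x (- i) = Floc (seg x (i - int r) (2 * r + 1))"
proof -
  define y where "y = shift_pow i x"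
  have y: "y \<in> XX" unfolding y_def using x by (rule shift_in_X)
  have sy: "seg y (- int r) (2 * r + 1) = seg x (i - int r) (2 * r + 1)"
    unfolding y_def seg_def by (simp add: algebra_simps shift_pow_apply)
  define y' where "y' = (SOME y'. y' \<in> XX \<and> seg y' (- int r) (2 * r + 1) = seg x (i - int r) (2 * r + 1))"
  have ex: "\<exists>y'. y' \<in> XX \<and> seg y' (- int r) (2 * r + 1) = seg x (i - int r) (2 * r + 1)"
    using y sy by blast
  have y': "y' \<in> XX \<and> seg y' (- int r) (2 * r + 1) = seg x (i - int r) (2 * r + 1)"
    unfolding y'_def by (rule someI_ex[OF ex])
  have "\<phi> y' 0 = \<phi> y 0"
    using loc[of y' y] y' y sy seg_eq_agree[of y' r y] by auto
  moreover have "\<phi> y 0 = \<phi> x (- i)" unfolding y_def using phi_shift[OF x] by (simp add: shift_pow_apply)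
  ultimately show ?thesis unfolding Floc_def y'_def[symmetric] by simp
qed

lemma phi_periodic:
  assumes x: "x \<in> XX" and per: "\<And>i. x (i + int m) = x i"
  shows "\<phi> x (j + int m) = \<phi> x j"
proof -
  have "shift_pow (int m) x = x" using per by (simp add: shift_pow_def fun_eq_iff)
  then have "\<phi> x = shift_pow (- int m) (\<phi> x)" using phi_shift[OF x, of "int m"] by simp
  then have "\<phi> x (j + int m) = shift_pow (- int m) (\<phi> x) (j + int m)" by simp
  then show ?thesis by (simp add: shift_pow_apply)
qed

end


lemma per_mod:
  assumes "\<And>i. x (i + int m) = x i"
  shows "x j = x (j mod int m)"
proof -
  have "x (j mod int m + (j div int m) * int m) = x (j mod int m)" by (rule periodic_int[of x m, OF assms])
  then show ?thesis by (simp add: mod_div_mult_eq)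
qed

context flipsys
begin

definition code :: "nat \<Rightarrow> nat \<Rightarrow> (int \<Rightarrow> 'a) \<Rightarrow> ('a \<times> 'a) list" where
  "code n N x = map (\<lambda>p. (x (int p - int r), x (- (int p - int r) - int n))) [0..<N]"

lemma length_code[simp]: "length (code n N x) = N" by (simp add: code_def)
lemma nth_code: "p < N \<Longrightarrow> code n N x ! p = (x (int p - int r), x (- (int p - int r) - int n))"
  by (simp add: code_def)

definition SymPreT :: "nat \<Rightarrow> ('a \<times> 'a) list \<Rightarrow> bool" where
  "SymPreT n v \<longleftrightarrow> (\<forall>p p'. p < length v \<longrightarrow> p' < length v \<longrightarrow> p + p' + n = 2 * r \<longrightarrow> v ! p' = prod.swap (v ! p))"
definition SymSufT :: "nat \<Rightarrow> ('a \<times> 'a) list \<Rightarrow> bool" where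
  "SymSufT d v \<longleftrightarrow> (\<forall>q q'. q < length v \<longrightarrow> q' < length v \<longrightarrow> q + q' + 1 = 2 * r + d \<longrightarrow> rev v ! q' = prod.swap (rev v ! q))"
definition LW :: "('a \<times> 'a) list \<Rightarrow> bool" where
  "LW v \<longleftrightarrow> snd (v ! r) = Floc (map fst v) \<and> fst (v ! r) = Floc (rev (map snd v))"
definition fwd :: "('a \<times> 'a) list \<Rightarrow> 'a list" where
  "fwd w = map fst (drop r w)"
definition bwd :: "nat \<Rightarrow> nat \<Rightarrow> ('a \<times> 'a) list \<Rightarrow> 'a list" where
  "bwd n d w = rev (map snd (drop (r + 1 - n) (take (length w - (2 * r + d)) w)))"
definition Good :: "nat \<Rightarrow> nat \<Rightarrow> ('a \<times> 'a) list \<Rightarrow> bool" where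
  "Good n d w \<longleftrightarrow> SymPreT n (take (2 * r + 1) w) \<and> SymSufT d (drop (length w - (2 * r + 1)) w) \<and>
     LocOK LW (2 * r + 1) w \<and> (\<exists>s. (s, s) \<in> (RelG E src tgt lab (fwd w) O RelG E src tgt lab (bwd n d w))\<^sup>+)"

lemma regfun_Good: "regfun (Good n d)"
proof -
  define K where "K = 2 * r + 1"
  have h1: "regfun (\<lambda>w. RelG E src tgt lab (map fst w))"
  proof (rule regfun_hom[where f="\<lambda>a b. a O b"])
    show "finite (range (\<lambda>w. RelG E src tgt lab (map fst w)))"
      by (rule finite_subset[OF _ RelG_finite_range[OF fE, of src tgt lab]]) auto
  qed (simp add: RelG_append)
  have h2: "regfun (\<lambda>w. RelG E src tgt lab (rev (map snd w)))"
  proof (rule regfun_hom[where f="\<lambda>a b. b O a"])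
    show "finite (range (\<lambda>w. RelG E src tgt lab (rev (map snd w))))"
      by (rule finite_subset[OF _ RelG_finite_range[OF fE, of src tgt lab]]) auto
  qed (simp add: RelG_append)
  have g4: "regfun (\<lambda>w. RelG E src tgt lab (fwd w))"
    unfolding fwd_def using regfun_drop[OF h1, of r] by simp
  have g5: "regfun (\<lambda>w. RelG E src tgt lab (bwd n d w))"
    unfolding bwd_def using regfun_takeminus[OF regfun_drop[OF h2, of "r + 1 - n"], of "2 * r + d"] by simp
  have all: "regfun (\<lambda>w. (take K w, drop (length w - K) w, LocOK LW K w, RelG E src tgt lab (fwd w), RelG E src tgt lab (bwd n d w)))"
    by (intro regfun_pair regfun_take regfun_lastK regfun_LocOK g4 g5) (simp add: K_def)
  define \<Phi> :: "('a \<times> 'a) list \<times> ('a \<times> 'a) list \<times> bool \<times> (nat \<times> nat) set \<times> (nat \<times> nat) set \<Rightarrow> bool" where "\<Phi> = (\<lambda>(a, b, c, R1, R2). SymPreT n a \<and> SymSufT d b \<and> c \<and> (\<exists>s. (s, s) \<in> (R1 O R2)\<^sup>+))"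
  have eq: "Good n d = (\<lambda>w. \<Phi>
     (take K w, drop (length w - K) w, LocOK LW K w, RelG E src tgt lab (fwd w), RelG E src tgt lab (bwd n d w)))"
    by (simp add: fun_eq_iff Good_def K_def \<Phi>_def)
  show ?thesis unfolding eq by (rule regfun_comp[OF all])
qed

context
  fixes n d N m :: nat
  assumes n1: "n \<le> 1" and d1: "d \<le> 1" and hN: "2 * N + n = m + 4 * r + 1 + d" and NK: "N \<ge> 4 * r + 2"
begin

lemma mN: "m \<ge> N" using hN n1 d1 NK by linarith
lemma m0: "m > 0" using mN NK by linarith

lemma window_code:
  assumes q: "q + (2 * r + 1) \<le> N"
  shows "map fst (take (2 * r + 1) (drop q (code n N x))) = seg x (int q - int r) (2 * r + 1)"
    and "rev (map snd (take (2 * r + 1) (drop q (code n N x)))) = seg x (- int q - int n - int r) (2 * r + 1)"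
    and "take (2 * r + 1) (drop q (code n N x)) ! r = (x (int q), x (- int q - int n))"
proof -
  let ?v = "take (2 * r + 1) (drop q (code n N x))"
  have lv: "length ?v = 2 * r + 1" using q by simp
  have vk: "?v ! k = (x (int q + int k - int r), x (- (int q + int k - int r) - int n))" if "k < 2 * r + 1" for k
    using that q by (simp add: nth_code)
  show "map fst ?v = seg x (int q - int r) (2 * r + 1)"
    by (rule nth_equalityI) (use lv vk in \<open>auto simp: algebra_simps\<close>)
  show "rev (map snd ?v) = seg x (- int q - int n - int r) (2 * r + 1)"
  proof (rule nth_equalityI)
    fix k assume "k < length (rev (map snd ?v))"
    then have k: "k < 2 * r + 1" using lv by simp
    have "rev (map snd ?v) ! k = snd (?v ! (2 * r - k))" using k lv by (simp add: rev_nth)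
    also have "\<dots> = x (- (int q + int (2 * r - k) - int r) - int n)" using k vk[of "2 * r - k"] by simp
    also have "\<dots> = seg x (- int q - int n - int r) (2 * r + 1) ! k" using k by (simp add: of_nat_diff algebra_simps)
    finally show "rev (map snd ?v) ! k = seg x (- int q - int n - int r) (2 * r + 1) ! k" .
  qed (use lv in simp)
  show "?v ! r = (x (int q), x (- int q - int n))" using vk[of r] by simp
qed

lemma cycle_code:
  assumes per: "\<And>i. x (i + int m) = x i"
  shows "fwd (code n N x) @ bwd n d (code n N x) = seg x 0 m"
proof (rule nth_equalityI)
  have lf: "length (fwd (code n N x)) = N - r" by (simp add: fwd_def)
  have lb: "length (bwd n d (code n N x)) = N - (2 * r + d) - (r + 1 - n)" using NK by (simp add: bwd_def)
  show "length (fwd (code n N x) @ bwd n d (code n N x)) = length (seg x 0 m)"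
    using lf lb hN NK n1 d1 by simp
  fix j assume "j < length (fwd (code n N x) @ bwd n d (code n N x))"
  then have j: "j < m" using lf lb hN NK n1 d1 by simp
  show "(fwd (code n N x) @ bwd n d (code n N x)) ! j = seg x 0 m ! j"
  proof (cases "j < N - r")
    case True
    then have "(fwd (code n N x) @ bwd n d (code n N x)) ! j = fst (code n N x ! (r + j))"
      using lf by (simp add: nth_append fwd_def)
    also have "\<dots> = x (int j)" using True by (simp add: nth_code)
    finally show ?thesis using j by simp
  next
    case False
    define t where "t = j - (N - r)"
    define LB where "LB = N - (2 * r + d) - (r + 1 - n)"
    have t: "t < LB" using j False hN NK n1 d1 unfolding t_def LB_def by linarith
    have "(fwd (code n N x) @ bwd n d (code n N x)) ! j = bwd n d (code n N x) ! t"
      using lf False unfolding t_def by (simp add: nth_append)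
    also have "\<dots> = snd (code n N x ! (r + 1 - n + (LB - Suc t)))"
      using t NK unfolding bwd_def LB_def by (simp add: rev_nth)
    also have "r + 1 - n + (LB - Suc t) = 2 * N - 3 * r - d - 1 - j"
      using t False j hN NK n1 d1 unfolding t_def LB_def by linarith
    also have "snd (code n N x ! (2 * N - 3 * r - d - 1 - j)) = x (int j - int m)"
    proof -
      have lt: "2 * N - 3 * r - d - 1 - j < N" using False j hN NK n1 d1 by linarith
      have "int (2 * N - 3 * r - d - 1 - j) = 2 * int N - 3 * int r - int d - 1 - int j"
        using False j hN NK n1 d1 by linarith
      moreover have "int m = 2 * int N + int n - 4 * int r - 1 - int d" using hN by linarith
      ultimately have "- (int (2 * N - 3 * r - d - 1 - j) - int r) - int n = int j - int m" by linarith
      moreover have "snd (code n N x ! (2 * N - 3 * r - d - 1 - j)) = x (- (int (2 * N - 3 * r - d - 1 - j) - int r) - int n)"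
        using lt by (simp add: nth_code)
      ultimately show ?thesis by simp
    qed
    also have "x (int j - int m) = x (int j)" using per[of "int j - int m"] by simp
    finally show ?thesis using j by simp
  qed
qed

end
end


context flipsys
begin

definition xw :: "nat \<Rightarrow> nat \<Rightarrow> nat \<Rightarrow> ('a \<times> 'a) list \<Rightarrow> int \<Rightarrow> 'a" where
  "xw n N m w j = (let j0 = nat (j mod int m) in if j0 < N - r then fst (w ! (j0 + r)) else snd (w ! (m + r - n - j0)))"

context
  fixes n d N m :: nat
  assumes n1: "n \<le> 1" and d1: "d \<le> 1" and hN: "2 * N + n = m + 4 * r + 1 + d" and NK: "N \<ge> 4 * r + 2"
begin

lemma mN': "m \<ge> N" using hN n1 d1 NK by linarith
lemma m0': "m > 0" using mN' NK by linarith
lemma hI: "int m = 2 * int N + int n - 4 * int r - 1 - int d" using hN by linarith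

lemma good_code:
  assumes x: "x \<in> XX" and per: "\<And>i. x (i + int m) = x i" and refl: "\<And>j. \<phi> x (j + int n) = x j"
  shows "Good n d (code n N x)"
proof -
  define w where "w = code n N x"
  define K where "K = 2 * r + 1"
  have NK2: "K \<le> N" using NK unfolding K_def by simp
  have perm: "x (i - int m) = x i" for i using per[of "i - int m"] by simp
  have s1: "SymPreT n (take K w)"
    unfolding SymPreT_def
  proof (intro allI impI)
    fix p p' assume p: "p < length (take K w)" and p': "p' < length (take K w)" and e: "p + p' + n = 2 * r"
    have pN: "p < N" "p' < N" "p < K" "p' < K" using p p' NK2 by (auto simp: w_def)
    have ie: "int p + int p' + int n = 2 * int r" using e by linarith
    have a1: "int p' - int r = - (int p - int r) - int n" using ie by linarith
    have a2: "- (int p' - int r) - int n = int p - int r" using ie by linarith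
    show "take K w ! p' = prod.swap (take K w ! p)"
      using pN unfolding w_def by (simp add: nth_code a1 a2)
  qed
  have s2: "SymSufT d (drop (N - K) w)"
    unfolding SymSufT_def
  proof (intro allI impI)
    fix q q' assume q: "q < length (drop (N - K) w)" and q': "q' < length (drop (N - K) w)" and e: "q + q' + 1 = 2 * r + d"
    have qK: "q < K" "q' < K" using q q' NK2 by (auto simp: w_def)
    have rq': "rev (drop (N - K) w) ! q' = w ! (N - 1 - q')" using qK NK2 q'
      by (simp add: rev_nth w_def)
    have rq0: "rev (drop (N - K) w) ! q = w ! (N - 1 - q)" using qK NK2 q by (simp add: rev_nth w_def)
    have lt: "N - 1 - q < N" "N - 1 - q' < N" using NK2 qK unfolding K_def by auto
    have iq: "int (N - 1 - q) = int N - 1 - int q" "int (N - 1 - q') = int N - 1 - int q'" using NK2 qK unfolding K_def by auto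
    have ie: "int q + int q' + 1 = 2 * int r + int d" using e by linarith
    have a1: "int (N - 1 - q') - int r = (- (int (N - 1 - q) - int r) - int n) + int m"
      using iq ie hI by linarith
    have a2: "- (int (N - 1 - q') - int r) - int n = (int (N - 1 - q) - int r) - int m"
      using iq ie hI by linarith
    have e1: "x (int (N - 1 - q') - int r) = x (- (int (N - 1 - q) - int r) - int n)" by (simp only: a1 per)
    have e2: "x (- (int (N - 1 - q') - int r) - int n) = x (int (N - 1 - q) - int r)" by (simp only: a2 perm)
    show "rev (drop (N - K) w) ! q' = prod.swap (rev (drop (N - K) w) ! q)"
      unfolding rq' rq0 unfolding w_def by (simp only: nth_code[OF lt(1)] nth_code[OF lt(2)] swap_simp e1 e2)
  qed
  have s3: "LocOK LW K w"
    unfolding LocOK_def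
  proof (intro allI impI)
    fix q assume q: "q + K \<le> length w"
    then have qN: "q + (2 * r + 1) \<le> N" by (simp add: w_def K_def)
    note wc = window_code[OF n1 d1 hN NK qN, of x]
    have "x (- int q - int n) = \<phi> x (- int q)" using refl[of "- int q - int n"] by simp
    also have "\<dots> = Floc (seg x (int q - int r) (2 * r + 1))" by (rule psi[OF x])
    finally have c1: "x (- int q - int n) = Floc (seg x (int q - int r) (2 * r + 1))" .
    have "x (int q) = \<phi> x (- (- int q - int n))" using refl[of "int q"] by (simp add: add.commute)
    also have "\<dots> = Floc (seg x (- int q - int n - int r) (2 * r + 1))" by (rule psi[OF x])
    finally have c2: "x (int q) = Floc (seg x (- int q - int n - int r) (2 * r + 1))" .
    show "LW (take K (drop q w))" unfolding LW_def w_def K_def wc using c1 c2 by simp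
  qed
  have "\<exists>s. (s, s) \<in> (RelG E src tgt lab (seg x 0 m))\<^sup>+"
    using periodic_criterion[where x=x and src=src and tgt=tgt and lab=lab and c=0, OF fE m0' per] x by simp
  then have s4: "\<exists>s. (s, s) \<in> (RelG E src tgt lab (fwd w) O RelG E src tgt lab (bwd n d w))\<^sup>+"
    unfolding w_def cycle_code[where x=x, OF n1 d1 hN NK per, symmetric] RelG_append .
  show ?thesis using s1 s2 s3 s4 unfolding Good_def w_def K_def by simp
qed

lemma xw_mod: "xw n N m w j = xw n N m w (j mod int m)"
  unfolding xw_def by simp

lemma xw_per: "xw n N m w (j + int m) = xw n N m w j"
  unfolding xw_def by simp

lemma xw_at:
  assumes "0 \<le> j" "j < int m"
  shows "xw n N m w j = (if nat j < N - r then fst (w ! (nat j + r)) else snd (w ! (m + r - n - nat j)))"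
  using assms unfolding xw_def by simp

lemma xw_at_nat:
  assumes "j < m"
  shows "xw n N m w (int j) = (if j < N - r then fst (w ! (j + r)) else snd (w ! (m + r - n - j)))"
  using xw_at[of "int j" w] assms by simp

lemma symsuf_use:
  assumes lw: "length w = N" and G: "Good n d w" and p: "p < N" and P': "P' < N"
    and q1: "N - 1 - p \<le> 2 * r" and q2: "N - 1 - P' \<le> 2 * r" and e: "(N - 1 - p) + (N - 1 - P') + 1 = 2 * r + d"
  shows "w ! P' = prod.swap (w ! p)"
proof -
  define K where "K = 2 * r + 1"
  have NK2: "K \<le> N" using NK unfolding K_def by simp
  have S: "SymSufT d (drop (N - K) w)" using G lw unfolding Good_def K_def by simp
  define q where "q = N - 1 - p"
  define q' where "q' = N - 1 - P'"
  have qK: "q < length (drop (N - K) w)" "q' < length (drop (N - K) w)"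
    using q1 q2 NK2 lw unfolding q_def q'_def K_def by auto
  have r1: "rev (drop (N - K) w) ! q = w ! p" using qK NK2 lw p unfolding q_def
    by (simp add: rev_nth)
  have r2: "rev (drop (N - K) w) ! q' = w ! P'" using qK NK2 lw P' unfolding q'_def
    by (simp add: rev_nth)
  have e': "q + q' + 1 = 2 * r + d" using e unfolding q_def q'_def .
  have "rev (drop (N - K) w) ! q' = prod.swap (rev (drop (N - K) w) ! q)"
    using S[unfolded SymSufT_def, rule_format, OF qK e'] .
  then show ?thesis using r1 r2 by simp
qed

lemma sympre_use:
  assumes lw: "length w = N" and G: "Good n d w" and e: "p + p' + n = 2 * r"
  shows "w ! p' = prod.swap (w ! p)"
proof -
  define K where "K = 2 * r + 1"
  have NK2: "K \<le> N" using NK unfolding K_def by simp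
  have S: "SymPreT n (take K w)" using G unfolding Good_def K_def by simp
  have pK: "p < length (take K w)" "p' < length (take K w)" using e NK2 lw unfolding K_def by auto
  have "take K w ! p' = prod.swap (take K w ! p)" using S[unfolded SymPreT_def, rule_format, OF pK e] .
  then show ?thesis using pK by simp
qed

lemma xw_fst:
  assumes lw: "length w = N" and G: "Good n d w" and p: "p < N"
  shows "xw n N m w (int p - int r) = fst (w ! p)"
proof (cases "r \<le> p")
  case True
  have "xw n N m w (int p - int r) = xw n N m w (int (p - r))"
    by (rule arg_cong[where f="xw n N m w"]) (use True in linarith)
  also have "\<dots> = fst (w ! (p - r + r))"
  proof -
    have "p - r < m" "p - r < N - r" using p mN' True by linarith+
    then show ?thesis using xw_at_nat[of "p - r" w] by simp
  qed
  also have "p - r + r = p" using True by simp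
  finally show ?thesis .
next
  case False
  have "xw n N m w (int p - int r) = xw n N m w (int p - int r + int m)" by (simp add: xw_per)
  also have "\<dots> = xw n N m w (int (m + p - r))"
    by (rule arg_cong[where f="xw n N m w"]) (use False mN' p NK in \<open>simp add: of_nat_diff\<close>)
  also have "xw n N m w (int (m + p - r)) = snd (w ! (2 * r - n - p))"
  proof -
    have "m + p - r < m" "\<not> (m + p - r < N - r)" "m + r - n - (m + p - r) = 2 * r - n - p"
      using False mN' p n1 NK by linarith+
    then show ?thesis using xw_at_nat[of "m + p - r" w] by simp
  qed
  also have "\<dots> = fst (w ! p)"
    using sympre_use[OF lw G, of p "2 * r - n - p"] False n1 by simp
  finally show ?thesis .
qed

lemma xw_snd:
  assumes lw: "length w = N" and G: "Good n d w" and p: "p < N"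
  shows "xw n N m w (- (int p - int r) - int n) = snd (w ! p)"
proof (cases "p + n \<le> r")
  case True
  have "xw n N m w (- (int p - int r) - int n) = xw n N m w (int (r - p - n))"
    by (rule arg_cong[where f="xw n N m w"]) (use True in linarith)
  also have "\<dots> = fst (w ! (r - p - n + r))"
  proof -
    have "r - p - n < m" "r - p - n < N - r" using NK mN' by linarith+
    then show ?thesis using xw_at_nat[of "r - p - n" w] by simp
  qed
  also have "r - p - n + r = 2 * r - n - p" using True by linarith
  also have "fst (w ! (2 * r - n - p)) = snd (w ! p)"
    using sympre_use[OF lw G, of p "2 * r - n - p"] True by simp
  finally show ?thesis .
next
  case False
  define j0 where "j0 = m + r - p - n"
  have "xw n N m w (- (int p - int r) - int n) = xw n N m w (- (int p - int r) - int n + int m)" by (simp add: xw_per)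
  also have "\<dots> = xw n N m w (int j0)"
    by (rule arg_cong[where f="xw n N m w"]) (unfold j0_def, use False mN' p n1 NK in linarith)
  finally have eq: "xw n N m w (- (int p - int r) - int n) = xw n N m w (int j0)" .
  have j0m: "j0 < m" unfolding j0_def using False p mN' NK by linarith
  show ?thesis
  proof (cases "j0 < N - r")
    case True
    define P' where "P' = j0 + r"
    have "xw n N m w (int j0) = fst (w ! P')" using xw_at_nat[OF j0m, of w] True unfolding P'_def by simp
    moreover have "w ! P' = prod.swap (w ! p)"
    proof (rule symsuf_use[OF lw G p])
      show "P' < N" using True unfolding P'_def by linarith
      show "N - 1 - p \<le> 2 * r" using True hN n1 d1 NK unfolding j0_def by linarith
      show "N - 1 - P' \<le> 2 * r" using True hN n1 d1 NK p unfolding j0_def P'_def by linarith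
      show "N - 1 - p + (N - 1 - P') + 1 = 2 * r + d" using True hN n1 d1 NK p False unfolding j0_def P'_def by linarith
    qed
    ultimately show ?thesis using eq by simp
  next
    case False2: False
    have "m + r - n - j0 = p" unfolding j0_def using False p mN' n1 NK by linarith
    then have "xw n N m w (int j0) = snd (w ! p)" using xw_at_nat[OF j0m, of w] False2 by simp
    then show ?thesis using eq by simp
  qed
qed

lemma code_xw:
  assumes lw: "length w = N" and G: "Good n d w"
  shows "code n N (xw n N m w) = w"
proof (rule nth_equalityI)
  show "length (code n N (xw n N m w)) = length w" using lw by simp
  fix p assume "p < length (code n N (xw n N m w))"
  then have p: "p < N" by simp
  show "code n N (xw n N m w) ! p = w ! p"
    using p xw_fst[OF lw G p] xw_snd[OF lw G p] by (simp add: nth_code prod_eq_iff)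
qed

lemma xw_periodic: "xw n N m w (i + int m) = xw n N m w i" by (rule xw_per)

lemma xw_X:
  assumes lw: "length w = N" and G: "Good n d w"
  shows "xw n N m w \<in> XX"
proof -
  have "\<exists>s. (s, s) \<in> (RelG E src tgt lab (fwd w) O RelG E src tgt lab (bwd n d w))\<^sup>+"
    using G unfolding Good_def by blast
  moreover have "fwd w @ bwd n d w = seg (xw n N m w) 0 m"
    using cycle_code[where x="xw n N m w", OF n1 d1 hN NK xw_periodic] code_xw[OF lw G] by simp
  ultimately have "\<exists>s. (s, s) \<in> (RelG E src tgt lab (seg (xw n N m w) 0 m))\<^sup>+"
    by (metis RelG_append)
  then show ?thesis
    using periodic_criterion[where x="xw n N m w" and src=src and tgt=tgt and lab=lab and c=0, OF fE m0' xw_periodic]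
    by simp
qed

lemma xw_refl:
  assumes lw: "length w = N" and G: "Good n d w"
  shows "\<phi> (xw n N m w) (j + int n) = xw n N m w j"
proof -
  define x where "x = xw n N m w"
  have x: "x \<in> XX" unfolding x_def by (rule xw_X[OF lw G])
  have per: "x (i + int m) = x i" for i unfolding x_def by (rule xw_per)
  have pphi: "\<phi> x (i + int m) = \<phi> x i" for i by (rule phi_periodic[OF x per])
  have cw: "code n N x = w" unfolding x_def by (rule code_xw[OF lw G])
  have loc: "LocOK LW (2 * r + 1) w" using G unfolding Good_def by simp
  have c: "x (- int q - int n) = \<phi> x (- int q) \<and> x (int q) = \<phi> x (int q + int n)"
    if q: "q + (2 * r + 1) \<le> N" for q
  proof -
    have "LW (take (2 * r + 1) (drop q w))" using loc q lw unfolding LocOK_def by simp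
    then have L: "LW (take (2 * r + 1) (drop q (code n N x)))" using cw by simp
    note wc = window_code[OF n1 d1 hN NK q, of x]
    have "x (- int q - int n) = Floc (seg x (int q - int r) (2 * r + 1))"
      using L unfolding LW_def wc by simp
    also have "\<dots> = \<phi> x (- int q)" by (rule psi[OF x, symmetric])
    finally have 1: "x (- int q - int n) = \<phi> x (- int q)" .
    have "x (int q) = Floc (seg x (- int q - int n - int r) (2 * r + 1))"
      using L unfolding LW_def wc by simp
    also have "\<dots> = \<phi> x (- (- int q - int n))" by (rule psi[OF x, symmetric])
    finally have 2: "x (int q) = \<phi> x (int q + int n)" by (simp add: add.commute)
    show ?thesis using 1 2 by simp
  qed
  define j0 where "j0 = j mod int m"
  have j0: "0 \<le> j0" "j0 < int m" unfolding j0_def using m0' by auto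
  have "\<phi> x (j0 + int n) = x j0"
  proof (cases "j0 + int (2 * r + 1) \<le> int N")
    case True
    then have "nat j0 + (2 * r + 1) \<le> N" using j0 by linarith
    from c[OF this] show ?thesis using j0 by simp
  next
    case False
    define q where "q = nat (int m - int n - j0)"
    have qi: "int q = int m - int n - j0" unfolding q_def using j0 n1 by linarith
    have "q + (2 * r + 1) \<le> N" using qi False hN n1 d1 NK by linarith
    from c[OF this] have "x (- int q - int n) = \<phi> x (- int q)" by simp
    then have "x (j0 - int m) = \<phi> x (j0 + int n - int m)" using qi by (simp add: algebra_simps)
    moreover have "x (j0 - int m) = x j0" using per[of "j0 - int m"] by simp
    moreover have "\<phi> x (j0 + int n - int m) = \<phi> x (j0 + int n)" using pphi[of "j0 + int n - int m"] by simp
    ultimately show ?thesis by simp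
  qed
  moreover have "x j = x j0" unfolding j0_def by (rule per_mod[of x m, OF per])
  moreover have "\<phi> x (j + int n) = \<phi> x (j0 + int n)"
  proof -
    have "\<phi> x (j + int n) = \<phi> x ((j + int n) mod int m)" by (rule per_mod[of "\<phi> x" m, OF pphi])
    also have "(j + int n) mod int m = (j0 + int n) mod int m" unfolding j0_def by (simp add: mod_simps)
    also have "\<phi> x ((j0 + int n) mod int m) = \<phi> x (j0 + int n)" by (rule per_mod[of "\<phi> x" m, OF pphi, symmetric])
    finally show ?thesis .
  qed
  ultimately show ?thesis unfolding x_def by simp
qed

lemma xw_code:
  assumes per: "\<And>i. x (i + int m) = x i"
  shows "xw n N m (code n N x) = x"
proof
  fix j
  define j0 where "j0 = nat (j mod int m)"
  have j0m: "j0 < m" unfolding j0_def using m0' by (simp add: nat_less_iff)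
  have xj: "x j = x (int j0)" unfolding j0_def using per_mod[of x m j, OF per] m0' by simp
  have "xw n N m (code n N x) j = xw n N m (code n N x) (int j0)"
    unfolding j0_def using xw_mod[of _ j] m0' by simp
  also have "\<dots> = x (int j0)"
  proof (cases "j0 < N - r")
    case True
    then show ?thesis using xw_at_nat[OF j0m] by (simp add: nth_code)
  next
    case False
    define P where "P = m + r - n - j0"
    have PN: "P < N" unfolding P_def using False hN n1 d1 NK j0m by linarith
    have "- (int P - int r) - int n = int j0 - int m" unfolding P_def using j0m n1 by linarith
    then have "snd (code n N x ! P) = x (int j0 - int m)" using PN by (simp add: nth_code)
    also have "\<dots> = x (int j0)" using per[of "int j0 - int m"] by simp
    finally show ?thesis using xw_at_nat[OF j0m] False unfolding P_def by simp
  qed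
  finally show "xw n N m (code n N x) j = x j" using xj by simp
qed

theorem card_P:
  "card {x \<in> XX. (shift_map ^^ m) x = x \<and> shift_pow (int n) (\<phi> x) = x} = card {w. length w = N \<and> Good n d w}"
proof -
  let ?P = "{x \<in> XX. (shift_map ^^ m) x = x \<and> shift_pow (int n) (\<phi> x) = x}"
  let ?G = "{w. length w = N \<and> Good n d w}"
  have Pchar: "x \<in> ?P \<longleftrightarrow> x \<in> XX \<and> (\<forall>i. x (i + int m) = x i) \<and> (\<forall>j. \<phi> x (j + int n) = x j)" for x
    by (auto simp: funpow_shift_map shift_pow_def fun_eq_iff)
  have "bij_betw (code n N) ?P ?G"
  proof (rule bij_betw_byWitness[where f'="xw n N m"])
    show "\<forall>a\<in>?P. xw n N m (code n N a) = a" using xw_code Pchar by blast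
    show "\<forall>a'\<in>?G. code n N (xw n N m a') = a'" using code_xw by blast
    show "code n N ` ?P \<subseteq> ?G" using good_code Pchar by auto
    show "xw n N m ` ?G \<subseteq> ?P" using xw_X xw_refl Pchar xw_per by auto
  qed
  then show ?thesis by (rule bij_betw_same_card)
qed

end
end


lemma count_seq_linrec:
  assumes F: "flipsys E src tgt lab \<phi> r"
    and n1: "n \<le> 1" and d1: "d \<le> 1"
    and hm: "\<And>k. k \<ge> k0 \<Longrightarrow> 2 * (k + C) + n = mm k + 4 * r + 1 + d \<and> k + C \<ge> 4 * r + 2"
  shows "linrec (\<lambda>k. real (card {x \<in> paths_shift E src tgt lab. (shift_map ^^ mm k) x = x \<and> shift_pow (int n) (\<phi> x) = x}))"
proof -
  interpret F: flipsys E src tgt lab \<phi> r by (rule F)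
  have "linrec (\<lambda>L. real (card {w. length w = L \<and> F.Good n d w}))"
    by (rule regfun_count_linrec[OF F.regfun_Good])
  then have L: "linrec (\<lambda>k. real (card {w. length w = k + C \<and> F.Good n d w}))"
    by (rule linrec_shift)
  show ?thesis
  proof (rule linrec_eventually[OF L])
    fix k assume "k \<ge> k0"
    then have h: "2 * (k + C) + n = mm k + 4 * r + 1 + d" "k + C \<ge> 4 * r + 2" using hm by auto
    show "real (card {x \<in> paths_shift E src tgt lab. (shift_map ^^ mm k) x = x \<and> shift_pow (int n) (\<phi> x) = x}) =
          real (card {w. length w = k + C \<and> F.Good n d w})"
      using F.card_P[OF n1 d1 h(1) h(2)] by simp
  qed
qed

theorem main_aux:
  fixes X :: "(int \<Rightarrow> 'a::finite) set" and \<phi> :: "(int \<Rightarrow> 'a) \<Rightarrow> (int \<Rightarrow> 'a)"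
  assumes "sofic_shift X" and "is_flip X \<phi>"
  shows "rational_fps (flip_gen_fun X \<phi>)"
proof -
  have "\<exists>(E::nat set) (src::nat \<Rightarrow> nat) (tgt::nat \<Rightarrow> nat) (lab::nat \<Rightarrow> 'a). finite E \<and> X = paths_shift E src tgt lab"
    using assms(1) unfolding sofic_shift_def paths_shift_def .
  then obtain E src tgt lab where fE: "finite E" and XE: "X = paths_shift E src tgt lab"
    by blast
  have hom: "homeomorphic_map (subtopology full_shift_topology X) (subtopology full_shift_topology X) \<phi>"
    and sh: "\<And>x. x \<in> X \<Longrightarrow> \<phi> (shift_map x) = shift_pow (-1) (\<phi> x)"
    using assms(2) unfolding is_flip_def by auto
  have cont: "continuous_map (subtopology full_shift_topology X) (subtopology full_shift_topology X) \<phi>"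
    using hom by (rule homeomorphic_imp_continuous_map)
  have topT: "topspace full_shift_topology = UNIV"
    unfolding full_shift_topology_def by (simp add: PiE_UNIV_eq)
  have phiX: "\<phi> x \<in> X" if "x \<in> X" for x
    using cont that unfolding continuous_map_def by (auto simp: topT)
  obtain r where loc: "\<forall>y\<in>X. \<forall>z\<in>X. (\<forall>i. \<bar>i\<bar> \<le> int r \<longrightarrow> y i = z i) \<longrightarrow> \<phi> y 0 = \<phi> z 0"
    using flip_local[OF fE XE cont] by blast
  have phiX': "\<And>x. x \<in> paths_shift E src tgt lab \<Longrightarrow> \<phi> x \<in> paths_shift E src tgt lab"
    using phiX unfolding XE .
  have sh': "\<And>x. x \<in> paths_shift E src tgt lab \<Longrightarrow> \<phi> (shift_map x) = shift_pow (-1) (\<phi> x)"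
    using sh unfolding XE .
  have loc': "\<forall>y\<in>paths_shift E src tgt lab. \<forall>z\<in>paths_shift E src tgt lab. (\<forall>i. \<bar>i\<bar> \<le> int r \<longrightarrow> y i = z i) \<longrightarrow> \<phi> y 0 = \<phi> z 0"
    using loc unfolding XE .
  have F: "flipsys E src tgt lab \<phi> r"
  proof
    show "finite E" by (rule fE)
  next
    fix x assume "x \<in> paths_shift E src tgt lab" then show "\<phi> x \<in> paths_shift E src tgt lab" by (rule phiX')
  next
    fix x assume "x \<in> paths_shift E src tgt lab" then show "\<phi> (shift_map x) = shift_pow (-1) (\<phi> x)" by (rule sh')
  next
    fix y z assume "y \<in> paths_shift E src tgt lab" "z \<in> paths_shift E src tgt lab" "\<forall>i. \<bar>i\<bar> \<le> int r \<longrightarrow> y i = z i"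
    then show "\<phi> y 0 = \<phi> z 0" using loc' by blast
  qed
  define p where "p m n = real (p_count X \<phi> m n)" for m n
  have pc: "p m (int n) = real (card {x \<in> paths_shift E src tgt lab. (shift_map ^^ m) x = x \<and> shift_pow (int n) (\<phi> x) = x})" for m n
    unfolding p_def p_count_def XE by simp
  have A: "linrec (\<lambda>k. p (2 * k + 1) 0)"
    using count_seq_linrec[OF F, of 0 0 "2 * r + 1" "2 * r + 1" "\<lambda>k. 2 * k + 1"] pc[of _ 0] by simp
  have B: "linrec (\<lambda>k. p (2 * k) 0)"
    using count_seq_linrec[OF F, of 0 1 "2 * r + 1" "2 * r + 1" "\<lambda>k. 2 * k"] pc[of _ 0] by simp
  have C: "linrec (\<lambda>k. p (2 * k) 1)"
    using count_seq_linrec[OF F, of 1 0 "2 * r + 2" "2 * r" "\<lambda>k. 2 * k"] pc[of _ 1] by simp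
  define A' where "A' k = p (2 * k + 1) 0" for k
  define B' where "B' k = (if k = 0 then 0 else (1/2) * p (2 * k) 0)" for k
  define C' where "C' k = (if k = 0 then 0 else (1/2) * p (2 * k) 1)" for k
  have lA: "linrec A'" using A unfolding A'_def by simp
  have lB: "linrec B'"
    by (rule linrec_eventually[OF linrec_scale[OF B, of "1/2"], of 1]) (auto simp: B'_def)
  have lC: "linrec C'"
    by (rule linrec_eventually[OF linrec_scale[OF C, of "1/2"], of 1]) (auto simp: C'_def)
  define s1 where "s1 k = (if k mod 2 = 1 then A' (k div 2) else 0)" for k
  define s2 where "s2 k = (if k mod 2 = 0 then B' (k div 2) else 0)" for k
  define s3 where "s3 k = (if k mod 2 = 0 then C' (k div 2) else 0)" for k
  have r1: "rational_fps (Abs_fps s1)" unfolding s1_def by (intro linrec_rational linrec_spread lA) simp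
  have r2: "rational_fps (Abs_fps s2)" unfolding s2_def by (intro linrec_rational linrec_spread lB) simp
  have r3: "rational_fps (Abs_fps s3)" unfolding s3_def by (intro linrec_rational linrec_spread lC) simp
  have eq: "flip_gen_fun X \<phi> = Abs_fps s1 + Abs_fps s2 + Abs_fps s3"
  proof (rule fps_ext)
    fix k
    show "fps_nth (flip_gen_fun X \<phi>) k = fps_nth (Abs_fps s1 + Abs_fps s2 + Abs_fps s3) k"
    proof (cases "odd k")
      case True
      then have "k = 2 * (k div 2) + 1" by presburger
      then show ?thesis using True unfolding flip_gen_fun_def s1_def s2_def s3_def A'_def p_def
        by (auto simp: odd_iff_mod_2_eq_one)
    next
      case False
      then have k2: "k = 2 * (k div 2)" by presburger
      show ?thesis
      proof (cases "k = 0")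
        case True then show ?thesis unfolding flip_gen_fun_def s1_def s2_def s3_def B'_def C'_def by simp
      next
        case False2: False
        then have "k div 2 \<noteq> 0" using k2 by auto
        then show ?thesis using False False2 k2 unfolding flip_gen_fun_def s1_def s2_def s3_def B'_def C'_def p_def
          by (auto simp: even_iff_mod_2_eq_zero field_simps)
      qed
    qed
  qed
  show ?thesis unfolding eq by (intro rational_add r1 r2 r3)
qed


theorem mainTheorem2:
  fixes X :: "(int \<Rightarrow> 'a::finite) set"
    and \<phi> :: "(int \<Rightarrow> 'a) \<Rightarrow> (int \<Rightarrow> 'a)"
  assumes "sofic_shift X"
    and "is_flip X \<phi>"
  shows "rational_fps (flip_gen_fun X \<phi>)"
  using assms by (rule main_aux)

end
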